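(* Let $d\ge4$ and $1\le p<d/2$ be fixed integers. Then for every positive integer $i$, $$\frac{\mathbf{E}(YX_i)}{\mathbf{E}(Y)}\to\lambda_i(1+\delta_i)\qquad\text{as } n\to\infty \text{ (along even } n),$$ where $\lambda_i=\frac{(d-1)^i}{2i}$ and $$\delta_i=\left(-\frac{d^2-4dp+4p^2-d}{d(d-1)}\right)^i .$$ Moreover, $\delta_i>-1$ for all $i\ge1$.
   Context: Configuration model: take $dn$ labelled points partitioned into $n$ labelled cells of $d$ points each. A pairing is a partition of the points into pairs; $\mathcal{P}_{n,d}$ is the uniform probability space on all pairings, and $G(F)$ is the $d$-regular multigraph obtained by contracting each cell of $F$ to a vertex. A $p$-orientation of a pairing is a choice, for each pair, of one point as its in-point and the other as its out-point, such that every cell contains exactly $p$ in-points or exactly $p$ out-points. $Y=Y(F)$ is the number of $p$-orientations of $F\in\mathcal{P}_{n,d}$. For $i\ge1$, $X_i=X_i(F)$ is the number of $i$-cycles in $F$, i.e. sets of $i$ pairs of $F$ whose corresponding edges form a cycle of length $i$ in $G(F)$ (for $i=1$ a loop, for $i=2$ a double edge). *)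

theory Defs
  imports Complex_Main
begin

definition cm_points :: "nat \<Rightarrow> nat \<Rightarrow> nat set" where
  "cm_points d n = {..<d * n}"

definition cm_cell :: "nat \<Rightarrow> nat \<Rightarrow> nat" where
  "cm_cell d x = x div d"

definition pairings :: "nat \<Rightarrow> nat \<Rightarrow> nat set set set" where
  "pairings d n = {F. (\<forall>e\<in>F. card e = 2 \<and> e \<subseteq> cm_points d n) \<and>
                      (\<forall>x\<in>cm_points d n. \<exists>!e. e \<in> F \<and> x \<in> e)}"

text \<open>A p-orientation is determined by its set S of in-points: each pair has exactly one
  in-point, and every cell has exactly p in-points or exactly p out-points.\<close>
definition p_orientations :: "nat \<Rightarrow> nat \<Rightarrow> nat \<Rightarrow> nat set set \<Rightarrow> nat set set" where
  "p_orientations d p n F = {S. S \<subseteq> cm_points d n \<and> (\<forall>e\<in>F. card (e \<inter> S) = 1) \<and>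
      (\<forall>v<n. card {x\<in>cm_points d n. cm_cell d x = v \<and> x \<in> S} = p \<or>
             card {x\<in>cm_points d n. cm_cell d x = v \<and> x \<notin> S} = p)}"

definition numY :: "nat \<Rightarrow> nat \<Rightarrow> nat \<Rightarrow> nat set set \<Rightarrow> nat" where
  "numY d p n F = card (p_orientations d p n F)"

text \<open>An i-cycle: a set C of i pairs forming a cycle of length i in G(F) (i=1 loop,
  i=2 double edge): distinct cells v_0..v_{i-1} and an enumeration of C such that the
  j-th pair joins v_j and v_{(j+1) mod i}.\<close>
definition is_cycle :: "nat \<Rightarrow> nat \<Rightarrow> nat set set \<Rightarrow> bool" where
  "is_cycle d i C \<longleftrightarrow> (\<exists>v e. inj_on v {..<i} \<and> bij_betw e {..<i} C \<and>
      (\<forall>j<i. cm_cell d ` (e j) = {v j, v ((j + 1) mod i)}))"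

definition numX :: "nat \<Rightarrow> nat \<Rightarrow> nat set set \<Rightarrow> nat" where
  "numX d i F = card {C. C \<subseteq> F \<and> is_cycle d i C}"

definition cm_expect :: "nat \<Rightarrow> nat \<Rightarrow> (nat set set \<Rightarrow> real) \<Rightarrow> real" where
  "cm_expect d n f = (\<Sum>F\<in>pairings d n. f F) / real (card (pairings d n))"

definition lambda_i :: "nat \<Rightarrow> nat \<Rightarrow> real" where
  "lambda_i d i = (real d - 1) ^ i / (2 * real i)"

definition delta_i :: "nat \<Rightarrow> nat \<Rightarrow> nat \<Rightarrow> real" where
  "delta_i d p i = (- ((real d)^2 - 4 * real d * real p + 4 * (real p)^2 - real d)
                       / (real d * (real d - 1))) ^ i"

end

theory Submission
  imports Defs "HOL-Library.FuncSet"
begin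


definition match :: "nat set \<Rightarrow> nat set \<Rightarrow> nat set set set" where
  "match X S = {F. (\<forall>e\<in>F. card e = 2 \<and> e \<subseteq> X \<and> card (e \<inter> S) = 1) \<and> (\<forall>x\<in>X. \<exists>!e. e \<in> F \<and> x \<in> e)}"

definition goodpairs :: "nat set \<Rightarrow> nat set \<Rightarrow> nat set set \<Rightarrow> bool" where
  "goodpairs X S D \<longleftrightarrow> (\<forall>e\<in>D. card e = 2 \<and> e \<subseteq> X \<and> card (e \<inter> S) = 1) \<and>
     (\<forall>e\<in>D. \<forall>e'\<in>D. e \<noteq> e' \<longrightarrow> e \<inter> e' = {})"

lemma match_disj:
  assumes "F \<in> match X S" "e \<in> F" "e' \<in> F" "x \<in> e" "x \<in> e'"
  shows "e = e'"
proof -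
  have "x \<in> X" using assms unfolding match_def by blast
  then have "\<exists>!e. e \<in> F \<and> x \<in> e" using assms(1) unfolding match_def by simp
  then show ?thesis using assms by (metis)
qed

lemma match_ex:
  assumes "F \<in> match X S" "x \<in> X"
  shows "\<exists>e. e \<in> F \<and> x \<in> e"
proof -
  have "\<exists>!e. e \<in> F \<and> x \<in> e" using assms unfolding match_def by simp
  then show ?thesis by (metis)
qed

lemma matchI:
  assumes "\<forall>e\<in>F. card e = 2 \<and> e \<subseteq> X \<and> card (e \<inter> S) = 1"
    and "\<And>x. x \<in> X \<Longrightarrow> \<exists>e. e \<in> F \<and> x \<in> e"
    and "\<And>x e e'. x \<in> X \<Longrightarrow> e \<in> F \<Longrightarrow> e' \<in> F \<Longrightarrow> x \<in> e \<Longrightarrow> x \<in> e' \<Longrightarrow> e = e'"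
  shows "F \<in> match X S"
proof -
  have "\<forall>x\<in>X. \<exists>!e. e \<in> F \<and> x \<in> e"
  proof
    fix x assume x: "x \<in> X"
    obtain e where "e \<in> F \<and> x \<in> e" using assms(2)[OF x] by blast
    then show "\<exists>!e. e \<in> F \<and> x \<in> e" using assms(3)[OF x] by (intro ex1I[of _ e]) auto
  qed
  then show ?thesis using assms(1) unfolding match_def by simp
qed

lemma match_good: "F \<in> match X S \<Longrightarrow> D \<subseteq> F \<Longrightarrow> goodpairs X S D"
proof -
  assume F: "F \<in> match X S" and D: "D \<subseteq> F"
  have "\<forall>e\<in>D. card e = 2 \<and> e \<subseteq> X \<and> card (e \<inter> S) = 1" using F D unfolding match_def by blast
  moreover have "\<forall>e\<in>D. \<forall>e'\<in>D. e \<noteq> e' \<longrightarrow> e \<inter> e' = {}"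
    using match_disj[OF F] D by blast
  ultimately show ?thesis unfolding goodpairs_def by blast
qed

lemma card2_nonempty: "card e = 2 \<Longrightarrow> e \<noteq> {}"
  by auto

lemma match_remove:
  assumes "goodpairs X S D"
  shows "bij_betw (\<lambda>F. F - D) {F \<in> match X S. D \<subseteq> F} (match (X - \<Union>D) S)"
proof (rule bij_betw_byWitness[where f' = "\<lambda>F. F \<union> D"])
  show "\<forall>F\<in>{F \<in> match X S. D \<subseteq> F}. F - D \<union> D = F" by auto
  show "\<forall>F\<in>match (X - \<Union> D) S. F \<union> D - D = F"
  proof
    fix F assume F: "F \<in> match (X - \<Union> D) S"
    have "F \<inter> D = {}"
    proof (rule ccontr)
      assume "F \<inter> D \<noteq> {}"
      then obtain e where "e \<in> F" "e \<in> D" by blast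
      then have "card e = 2" "e \<subseteq> X - \<Union>D" using F unfolding match_def by auto
      moreover obtain y where "y \<in> e" using \<open>card e = 2\<close> card2_nonempty by blast
      ultimately show False using \<open>e \<in> D\<close> by blast
    qed
    then show "F \<union> D - D = F" by blast
  qed
  show "(\<lambda>F. F - D) ` {F \<in> match X S. D \<subseteq> F} \<subseteq> match (X - \<Union> D) S"
  proof
    fix G assume "G \<in> (\<lambda>F. F - D) ` {F \<in> match X S. D \<subseteq> F}"
    then obtain F where F: "F \<in> match X S" "D \<subseteq> F" and G: "G = F - D" by blast
    have "\<forall>e\<in>G. card e = 2 \<and> e \<subseteq> X - \<Union>D \<and> card (e \<inter> S) = 1"
    proof
      fix e assume e: "e \<in> G"
      have "e \<inter> \<Union>D = {}"
      proof (rule ccontr)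
        assume "e \<inter> \<Union>D \<noteq> {}"
        then obtain x e' where "x \<in> e" "x \<in> e'" "e' \<in> D" by blast
        then have "e = e'" using match_disj[OF F(1)] e G F(2) by blast
        then show False using e G \<open>e' \<in> D\<close> by blast
      qed
      moreover have "e \<in> F" using e G by blast
      ultimately show "card e = 2 \<and> e \<subseteq> X - \<Union>D \<and> card (e \<inter> S) = 1"
        using F(1) unfolding match_def by blast
    qed
    moreover have "\<exists>e. e \<in> G \<and> x \<in> e" if x: "x \<in> X - \<Union>D" for x
    proof -
      obtain e where e: "e \<in> F" "x \<in> e" using match_ex[OF F(1)] x by blast
      then have "e \<in> G" using x G by blast
      then show ?thesis using e by blast
    qed
    moreover have "e = e'" if "e \<in> G" "e' \<in> G" "x \<in> e" "x \<in> e'" for x e e'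
      using match_disj[OF F(1)] that G by blast
    ultimately show "G \<in> match (X - \<Union> D) S" by (intro matchI) auto
  qed
  show "(\<lambda>F. F \<union> D) ` match (X - \<Union> D) S \<subseteq> {F \<in> match X S. D \<subseteq> F}"
  proof
    fix G assume "G \<in> (\<lambda>F. F \<union> D) ` match (X - \<Union> D) S"
    then obtain F where F: "F \<in> match (X - \<Union> D) S" and G: "G = F \<union> D" by blast
    have "\<forall>e\<in>G. card e = 2 \<and> e \<subseteq> X \<and> card (e \<inter> S) = 1"
    proof
      fix e assume "e \<in> G"
      then consider "e \<in> F" | "e \<in> D" using G by blast
      then show "card e = 2 \<and> e \<subseteq> X \<and> card (e \<inter> S) = 1"
      proof cases
        case 1 then show ?thesis using F unfolding match_def by blast
      next
        case 2 then show ?thesis using assms unfolding goodpairs_def by blast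
      qed
    qed
    moreover have "\<exists>e. e \<in> G \<and> x \<in> e" if x: "x \<in> X" for x
    proof (cases "x \<in> \<Union>D")
      case True then show ?thesis using G by blast
    next
      case False
      then obtain e where "e \<in> F" "x \<in> e" using match_ex[OF F] x by blast
      then show ?thesis using G by blast
    qed
    moreover have "e = e'" if x: "x \<in> X" and ee: "e \<in> G" "e' \<in> G" "x \<in> e" "x \<in> e'" for x e e'
    proof (cases "x \<in> \<Union>D")
      case True
      have "e \<notin> F" "e' \<notin> F"
        using F True ee unfolding match_def by blast+
      then have "e \<in> D" "e' \<in> D" using ee G by blast+
      then show ?thesis using assms ee unfolding goodpairs_def by blast
    next
      case False
      have "e \<notin> D" "e' \<notin> D" using False ee by blast+
      then have "e \<in> F" "e' \<in> F" using ee G by blast+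
      then show ?thesis using match_disj[OF F] ee by blast
    qed
    ultimately have "G \<in> match X S" by (intro matchI) blast+
    then show "G \<in> {F \<in> match X S. D \<subseteq> F}" using G by blast
  qed
qed


lemma card_UN_one:
  assumes "finite D" "\<And>e. e \<in> D \<Longrightarrow> finite (g e)" "\<And>e. e \<in> D \<Longrightarrow> card (g e) = 1"
    "\<And>e e'. e \<in> D \<Longrightarrow> e' \<in> D \<Longrightarrow> e \<noteq> e' \<Longrightarrow> g e \<inter> g e' = {}"
  shows "card (\<Union>e\<in>D. g e) = card D"
proof -
  have "card (\<Union>e\<in>D. g e) = (\<Sum>e\<in>D. card (g e))"
    using assms by (intro card_UN_disjoint) auto
  also have "\<dots> = card D" using assms(3) by simp
  finally show ?thesis .
qed

lemma good_card:
  assumes "goodpairs X S D" "finite X"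
  shows "card (\<Union>D \<inter> S) = card D" "card (\<Union>D - S) = card D" "finite D"
proof -
  have D: "D \<subseteq> Pow X" using assms unfolding goodpairs_def by blast
  then show fD: "finite D" using assms(2) by (meson finite_Pow_iff finite_subset)
  have fe: "finite e" if "e \<in> D" for e using D that assms(2) by (meson PowD finite_subset subsetD)
  have c1: "card (e \<inter> S) = 1" if "e \<in> D" for e using assms that unfolding goodpairs_def by blast
  have c2: "card (e - S) = 1" if "e \<in> D" for e
  proof -
    have "card e = 2" using assms that unfolding goodpairs_def by blast
    moreover have "card e = card (e \<inter> S) + card (e - S)"
      using fe[OF that] by (rule card_Int_Diff)
    ultimately show ?thesis using c1[OF that] by simp
  qed
  have dj: "e \<inter> e' = {}" if "e \<in> D" "e' \<in> D" "e \<noteq> e'" for e e'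
    using assms that unfolding goodpairs_def by blast
  have "\<Union>D \<inter> S = (\<Union>e\<in>D. e \<inter> S)" by blast
  also have "card \<dots> = card D" using fD fe c1 dj by (intro card_UN_one) blast+
  finally show "card (\<Union>D \<inter> S) = card D" .
  have "\<Union>D - S = (\<Union>e\<in>D. e - S)" by blast
  also have "card \<dots> = card D" using fD fe c2 dj by (intro card_UN_one) blast+
  finally show "card (\<Union>D - S) = card D" .
qed

lemma good_card_rest:
  assumes "goodpairs X S D" "finite X"
  shows "card ((X - \<Union>D) \<inter> S) = card (X \<inter> S) - card D"
    "card ((X - \<Union>D) - S) = card (X - S) - card D"
proof -
  have sub: "\<Union>D \<subseteq> X" using assms(1) unfolding goodpairs_def by blast
  have "(X - \<Union>D) \<inter> S = (X \<inter> S) - (\<Union>D \<inter> S)" by blast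
  moreover have "card ((X \<inter> S) - (\<Union>D \<inter> S)) = card (X \<inter> S) - card (\<Union>D \<inter> S)"
    using sub assms(2) by (intro card_Diff_subset) (auto intro: finite_subset)
  ultimately show "card ((X - \<Union>D) \<inter> S) = card (X \<inter> S) - card D"
    using good_card[OF assms] by simp
  have "(X - \<Union>D) - S = (X - S) - (\<Union>D - S)" by blast
  moreover have "card ((X - S) - (\<Union>D - S)) = card (X - S) - card (\<Union>D - S)"
    using sub assms(2) by (intro card_Diff_subset) (auto intro: finite_subset)
  ultimately show "card ((X - \<Union>D) - S) = card (X - S) - card D"
    using good_card[OF assms] by simp
qed

lemma match_balanced:
  assumes "F \<in> match X S" "finite X"
  shows "card (X \<inter> S) = card (X - S)"
proof -
  have "goodpairs X S F" using match_good[OF assms(1)] by simp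
  moreover have "\<Union>F = X" using assms(1) match_ex[OF assms(1)] unfolding match_def by blast
  ultimately show ?thesis using good_card[of X S F] assms(2) by simp
qed

lemma match_finite: "finite X \<Longrightarrow> finite (match X S)"
proof -
  assume "finite X"
  moreover have "match X S \<subseteq> Pow (Pow X)" unfolding match_def by blast
  ultimately show ?thesis by (meson finite_Pow_iff finite_subset)
qed

lemma match_card_aux:
  "\<forall>X. finite X \<longrightarrow> card (X \<inter> S) = k \<longrightarrow> card (X - S) = k \<longrightarrow> card (match X S) = fact k"
proof (induction k)
  case 0
  show ?case
  proof (intro allI impI)
    fix X assume X: "finite X" "card (X \<inter> S) = 0" "card (X - S) = 0"
    then have "X = {}" by (metis Diff_disjoint Int_Diff_Un Un_empty card_0_eq finite_Diff finite_Int inf.idem)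
    then have "match X S = {{}}" unfolding match_def by auto
    then show "card (match X S) = fact 0" by simp
  qed
next
  case (Suc k)
  show ?case
  proof (intro allI impI)
    fix X assume X: "finite X" "card (X \<inter> S) = Suc k" "card (X - S) = Suc k"
    then obtain a where a: "a \<in> X \<inter> S" by (metis card.empty ex_in_conv nat.distinct(1))
    define B where "B = X - S"
    have fB: "finite B" using X unfolding B_def by simp
    have cover: "match X S = (\<Union>b\<in>B. {F \<in> match X S. {{a,b}} \<subseteq> F})"
    proof (intro equalityI subsetI)
      fix F assume F: "F \<in> match X S"
      then obtain e where e: "e \<in> F" "a \<in> e" using match_ex a by blast
      then have ce: "card e = 2" "e \<subseteq> X" "card (e \<inter> S) = 1" using F unfolding match_def by blast+
      obtain b where b: "e = {a, b}" "a \<noteq> b" using ce(1) e(2)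
        by (metis card_2_iff insert_commute insert_iff singletonD)
      have "b \<notin> S"
      proof
        assume "b \<in> S"
        then have "e \<inter> S = {a, b}" using a b by blast
        then show False using ce(3) b by simp
      qed
      then have "b \<in> B" using ce(2) b unfolding B_def by blast
      then show "F \<in> (\<Union>b\<in>B. {F \<in> match X S. {{a,b}} \<subseteq> F})" using F e b by blast
    qed blast
    have piece: "card {F \<in> match X S. {{a,b}} \<subseteq> F} = fact k" if b: "b \<in> B" for b
    proof -
      have ab: "a \<noteq> b" "a \<in> S" "b \<notin> S" using a b unfolding B_def by blast+
      have g: "goodpairs X S {{a,b}}"
        unfolding goodpairs_def using a b ab unfolding B_def
        by (auto simp: Int_insert_left)
      have "card {F \<in> match X S. {{a,b}} \<subseteq> F} = card (match (X - \<Union>{{a,b}}) S)"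
        using match_remove[OF g] bij_betw_same_card by blast
      also have "\<dots> = fact k"
      proof -
        have "card ((X - \<Union>{{a,b}}) \<inter> S) = k" "card ((X - \<Union>{{a,b}}) - S) = k"
          using good_card_rest[OF g X(1)] X by simp_all
        then show ?thesis using Suc.IH[rule_format, of "X - \<Union>{{a,b}}"] X(1) by simp
      qed
      finally show ?thesis .
    qed
    have "card (match X S) = card (\<Union>b\<in>B. {F \<in> match X S. {{a,b}} \<subseteq> F})"
      by (rule arg_cong[OF cover])
    also have "\<dots> = (\<Sum>b\<in>B. card {F \<in> match X S. {{a,b}} \<subseteq> F})"
    proof (rule card_UN_disjoint[OF fB])
      show "\<forall>b\<in>B. finite {F \<in> match X S. {{a, b}} \<subseteq> F}" using match_finite X(1) by auto
      show "\<forall>b\<in>B. \<forall>b'\<in>B. b \<noteq> b' \<longrightarrow> {F \<in> match X S. {{a, b}} \<subseteq> F} \<inter> {F \<in> match X S. {{a, b'}} \<subseteq> F} = {}"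
      proof (intro ballI impI)
        fix b b' assume bb: "b \<in> B" "b' \<in> B" "b \<noteq> b'"
        show "{F \<in> match X S. {{a, b}} \<subseteq> F} \<inter> {F \<in> match X S. {{a, b'}} \<subseteq> F} = {}"
        proof (rule ccontr)
          assume "\<not> ?thesis"
          then obtain F where "F \<in> match X S" "{a,b} \<in> F" "{a,b'} \<in> F" by blast
          then have "{a,b} = {a,b'}" using match_disj by blast
          then show False using bb a unfolding B_def by (metis doubleton_eq_iff)
        qed
      qed
    qed
    also have "\<dots> = card B * fact k" using piece by simp
    also have "\<dots> = fact (Suc k)" using X(3) unfolding B_def by simp
    finally show "card (match X S) = fact (Suc k)" .
  qed
qed

lemma match_card: "finite X \<Longrightarrow> card (X \<inter> S) = k \<Longrightarrow> card (X - S) = k \<Longrightarrow> card (match X S) = fact k"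
  using match_card_aux by blast

lemma match_card_sub:
  assumes "finite X" "card (X \<inter> S) = k" "card (X - S) = k" "goodpairs X S D"
  shows "card {F \<in> match X S. D \<subseteq> F} = fact (k - card D)"
proof -
  have "card {F \<in> match X S. D \<subseteq> F} = card (match (X - \<Union>D) S)"
    using match_remove[OF assms(4)] bij_betw_same_card by blast
  also have "\<dots> = fact (k - card D)"
    using good_card_rest[OF assms(4,1)] assms(1-3) by (intro match_card) auto
  finally show ?thesis .
qed


definition Vall :: "nat \<Rightarrow> nat \<Rightarrow> nat \<Rightarrow> nat set set" where
  "Vall d p n = {S. S \<subseteq> cm_points d n \<and>
      (\<forall>v<n. card {x\<in>cm_points d n. cm_cell d x = v \<and> x \<in> S} = p \<or>
             card {x\<in>cm_points d n. cm_cell d x = v \<and> x \<notin> S} = p)}"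

definition goodcyc :: "nat \<Rightarrow> nat \<Rightarrow> nat \<Rightarrow> nat set \<Rightarrow> nat set set set" where
  "goodcyc d i n S = {C. goodpairs (cm_points d n) S C \<and> is_cycle d i C}"

lemma sum_card_swap:
  assumes "finite A" "finite B"
  shows "(\<Sum>x\<in>A. card {y\<in>B. R x y}) = (\<Sum>y\<in>B. card {x\<in>A. R x y})"
proof -
  have "(\<Sum>x\<in>A. card {y\<in>B. R x y}) = (\<Sum>x\<in>A. \<Sum>y\<in>B. if R x y then 1 else 0)"
    using assms by (simp add: sum.If_cases Int_def)
  also have "\<dots> = (\<Sum>y\<in>B. \<Sum>x\<in>A. if R x y then 1 else 0)" by (rule sum.swap)
  also have "\<dots> = (\<Sum>y\<in>B. card {x\<in>A. R x y})"
    using assms by (simp add: sum.If_cases Int_def)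
  finally show ?thesis .
qed

lemma finite_pairings: "finite (pairings d n)"
proof -
  have "pairings d n \<subseteq> Pow (Pow (cm_points d n))" unfolding pairings_def by blast
  then show ?thesis by (rule finite_subset) (simp add: cm_points_def)
qed

lemma finite_Vall: "finite (Vall d p n)"
proof -
  have "Vall d p n \<subseteq> Pow (cm_points d n)" unfolding Vall_def by blast
  then show ?thesis by (rule finite_subset) (simp add: cm_points_def)
qed

lemma pairings_match: "(F \<in> pairings d n \<and> (\<forall>e\<in>F. card (e \<inter> S) = 1)) \<longleftrightarrow> F \<in> match (cm_points d n) S"
  unfolding pairings_def match_def by blast

lemma numY_eq: "numY d p n F = card {S \<in> Vall d p n. \<forall>e\<in>F. card (e \<inter> S) = 1}"
  unfolding numY_def p_orientations_def Vall_def by (rule arg_cong[where f=card]) blast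

definition Cyc :: "nat \<Rightarrow> nat \<Rightarrow> nat \<Rightarrow> nat set set set" where
  "Cyc d i n = {C. C \<subseteq> Pow (cm_points d n) \<and> is_cycle d i C}"

lemma finite_Cyc: "finite (Cyc d i n)"
proof -
  have "Cyc d i n \<subseteq> Pow (Pow (cm_points d n))" unfolding Cyc_def by blast
  then show ?thesis by (rule finite_subset) (simp add: cm_points_def)
qed

lemma numX_eq: "F \<in> pairings d n \<Longrightarrow> numX d i F = card {C \<in> Cyc d i n. C \<subseteq> F}"
  unfolding numX_def Cyc_def pairings_def by (rule arg_cong[where f=card]) blast

lemma card_cycle: "is_cycle d i C \<Longrightarrow> card C = i"
  unfolding is_cycle_def by (metis bij_betw_same_card card_lessThan)

lemma sumY:
  "(\<Sum>F\<in>pairings d n. numY d p n F) = (\<Sum>S\<in>Vall d p n. card (match (cm_points d n) S))"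
proof -
  have "(\<Sum>F\<in>pairings d n. numY d p n F) = (\<Sum>F\<in>pairings d n. card {S \<in> Vall d p n. \<forall>e\<in>F. card (e \<inter> S) = 1})"
    by (simp add: numY_eq)
  also have "\<dots> = (\<Sum>S\<in>Vall d p n. card {F \<in> pairings d n. \<forall>e\<in>F. card (e \<inter> S) = 1})"
    by (rule sum_card_swap[OF finite_pairings finite_Vall])
  also have "\<dots> = (\<Sum>S\<in>Vall d p n. card (match (cm_points d n) S))"
    by (rule sum.cong[OF refl], rule arg_cong[where f=card]) (use pairings_match in blast)
  finally show ?thesis .
qed

lemma sumYX:
  "(\<Sum>F\<in>pairings d n. numY d p n F * numX d i F) =
   (\<Sum>SC\<in>Vall d p n \<times> Cyc d i n. card {F \<in> match (cm_points d n) (fst SC). snd SC \<subseteq> F})"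
proof -
  have "(\<Sum>F\<in>pairings d n. numY d p n F * numX d i F) =
     (\<Sum>F\<in>pairings d n. card {SC \<in> Vall d p n \<times> Cyc d i n. (\<forall>e\<in>F. card (e \<inter> fst SC) = 1) \<and> snd SC \<subseteq> F})"
  proof (rule sum.cong[OF refl])
    fix F assume F: "F \<in> pairings d n"
    have "{SC \<in> Vall d p n \<times> Cyc d i n. (\<forall>e\<in>F. card (e \<inter> fst SC) = 1) \<and> snd SC \<subseteq> F}
       = {S \<in> Vall d p n. \<forall>e\<in>F. card (e \<inter> S) = 1} \<times> {C \<in> Cyc d i n. C \<subseteq> F}" by auto
    then show "numY d p n F * numX d i F = card {SC \<in> Vall d p n \<times> Cyc d i n. (\<forall>e\<in>F. card (e \<inter> fst SC) = 1) \<and> snd SC \<subseteq> F}"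
      using F by (simp add: numY_eq numX_eq card_cartesian_product)
  qed
  also have "\<dots> = (\<Sum>SC\<in>Vall d p n \<times> Cyc d i n. card {F \<in> pairings d n. (\<forall>e\<in>F. card (e \<inter> fst SC) = 1) \<and> snd SC \<subseteq> F})"
    by (rule sum_card_swap[OF finite_pairings]) (simp add: finite_Vall finite_Cyc)
  also have "\<dots> = (\<Sum>SC\<in>Vall d p n \<times> Cyc d i n. card {F \<in> match (cm_points d n) (fst SC). snd SC \<subseteq> F})"
    by (rule sum.cong[OF refl], rule arg_cong[where f=card]) (use pairings_match in blast)
  finally show ?thesis .
qed

definition Vk :: "nat \<Rightarrow> nat \<Rightarrow> nat \<Rightarrow> nat set set" where
  "Vk d p m = {S \<in> Vall d p (2*m). card S = d * m}"

lemma finite_Vk: "finite (Vk d p m)"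
  unfolding Vk_def using finite_Vall by simp

lemma cards_S:
  assumes "S \<subseteq> cm_points d (2*m)"
  shows "card (cm_points d (2*m) \<inter> S) = card S" "card (cm_points d (2*m) - S) = 2 * (d * m) - card S"
proof -
  show "card (cm_points d (2*m) \<inter> S) = card S" using assms by (simp add: Int_absorb1)
  have "card (cm_points d (2*m) - S) = card (cm_points d (2*m)) - card S"
    using assms by (intro card_Diff_subset) (auto simp: cm_points_def intro: finite_subset)
  then show "card (cm_points d (2*m) - S) = 2 * (d * m) - card S" by (simp add: cm_points_def)
qed

lemma sumY2: "(\<Sum>F\<in>pairings d (2*m). numY d p (2*m) F) = card (Vk d p m) * fact (d * m)"
proof -
  have "(\<Sum>F\<in>pairings d (2*m). numY d p (2*m) F) = (\<Sum>S\<in>Vall d p (2*m). card (match (cm_points d (2*m)) S))"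
    by (rule sumY)
  also have "\<dots> = (\<Sum>S\<in>Vall d p (2*m). if card S = d * m then fact (d*m) else 0)"
  proof (rule sum.cong[OF refl])
    fix S assume S: "S \<in> Vall d p (2*m)"
    then have sub: "S \<subseteq> cm_points d (2*m)" unfolding Vall_def by blast
    show "card (match (cm_points d (2*m)) S) = (if card S = d * m then fact (d*m) else 0)"
    proof (cases "card S = d * m")
      case True
      then show ?thesis using cards_S[OF sub] by (simp add: match_card cm_points_def)
    next
      case False
      have "match (cm_points d (2*m)) S = {}"
      proof (rule ccontr)
        assume "\<not> ?thesis"
        then obtain F where "F \<in> match (cm_points d (2*m)) S" by blast
        from match_balanced[OF this] have "card S = 2 * (d * m) - card S"
          using cards_S[OF sub] by (simp add: cm_points_def)
        then show False using False by simp
      qed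
      then show ?thesis using False by simp
    qed
  qed
  also have "\<dots> = card (Vk d p m) * fact (d * m)"
    by (simp add: sum.If_cases Int_def finite_Vall Vk_def)
  finally show ?thesis .
qed

lemma sumYX2:
  "(\<Sum>F\<in>pairings d (2*m). numY d p (2*m) F * numX d i F)
     = (\<Sum>S\<in>Vk d p m. card (goodcyc d i (2*m) S)) * fact (d * m - i)"
proof -
  let ?P = "cm_points d (2*m)"
  have "(\<Sum>F\<in>pairings d (2*m). numY d p (2*m) F * numX d i F)
     = (\<Sum>SC\<in>Vall d p (2*m) \<times> Cyc d i (2*m). card {F \<in> match ?P (fst SC). snd SC \<subseteq> F})"
    by (rule sumYX)
  also have "\<dots> = (\<Sum>SC\<in>Vall d p (2*m) \<times> Cyc d i (2*m).
       if card (fst SC) = d * m \<and> goodpairs ?P (fst SC) (snd SC) then fact (d*m - i) else 0)"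
  proof (rule sum.cong[OF refl])
    fix SC assume SC: "SC \<in> Vall d p (2*m) \<times> Cyc d i (2*m)"
    obtain S C where SCe: "SC = (S, C)" by fastforce
    have sub: "S \<subseteq> ?P" using SC SCe unfolding Vall_def by auto
    have cyc: "is_cycle d i C" using SC SCe unfolding Cyc_def by auto
    show "card {F \<in> match ?P (fst SC). snd SC \<subseteq> F} =
       (if card (fst SC) = d * m \<and> goodpairs ?P (fst SC) (snd SC) then fact (d*m - i) else 0)"
    proof (cases "card S = d * m \<and> goodpairs ?P S C")
      case True
      then show ?thesis using SCe cards_S[OF sub] card_cycle[OF cyc]
        by (simp add: match_card_sub cm_points_def)
    next
      case False
      have e: "{F \<in> match ?P S. C \<subseteq> F} = {}"
      proof (rule ccontr)
        assume "\<not> ?thesis"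
        then obtain F where F: "F \<in> match ?P S" "C \<subseteq> F" by blast
        from match_balanced[OF F(1)] have "card S = 2 * (d * m) - card S"
          using cards_S[OF sub] by (simp add: cm_points_def)
        moreover have "goodpairs ?P S C" using match_good[OF F] .
        ultimately show False using False by simp
      qed
      show ?thesis using False unfolding SCe fst_conv snd_conv e by simp
    qed
  qed
  also have "\<dots> = (\<Sum>S\<in>Vall d p (2*m). \<Sum>C\<in>Cyc d i (2*m).
       if card S = d * m \<and> goodpairs ?P S C then fact (d*m - i) else 0)"
    by (rule sum.cartesian_product[symmetric, unfolded split_def])
  also have "\<dots> = (\<Sum>S\<in>Vall d p (2*m). if card S = d * m then card (goodcyc d i (2*m) S) * fact (d*m - i) else 0)"
  proof (rule sum.cong[OF refl])
    fix S assume S: "S \<in> Vall d p (2*m)"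
    have "goodcyc d i (2*m) S = {C \<in> Cyc d i (2*m). goodpairs ?P S C}"
      unfolding goodcyc_def Cyc_def goodpairs_def by blast
    then show "(\<Sum>C\<in>Cyc d i (2*m). if card S = d * m \<and> goodpairs ?P S C then fact (d*m - i) else 0)
       = (if card S = d * m then card (goodcyc d i (2*m) S) * fact (d*m - i) else 0)"
      by (simp add: sum.If_cases Int_def finite_Cyc)
  qed
  also have "\<dots> = (\<Sum>S\<in>Vk d p m. card (goodcyc d i (2*m) S)) * fact (d * m - i)"
    by (simp add: sum.If_cases Int_def finite_Vall Vk_def sum_distrib_right)
  finally show ?thesis .
qed

lemma ratio_eq:
  "cm_expect d (2 * m) (\<lambda>F. real (numY d p (2 * m) F * numX d i F))
              / cm_expect d (2 * m) (\<lambda>F. real (numY d p (2 * m) F))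
   = real ((\<Sum>S\<in>Vk d p m. card (goodcyc d i (2*m) S)) * fact (d * m - i)) / real (card (Vk d p m) * fact (d * m))"
proof -
  have e1: "(\<Sum>F\<in>pairings d (2*m). real (numY d p (2*m) F * numX d i F)) = real ((\<Sum>S\<in>Vk d p m. card (goodcyc d i (2*m) S)) * fact (d * m - i))"
    by (simp only: of_nat_sum[symmetric] sumYX2)
  have e2: "(\<Sum>F\<in>pairings d (2*m). real (numY d p (2*m) F)) = real (card (Vk d p m) * fact (d * m))"
    by (simp only: of_nat_sum[symmetric] sumY2)
  show ?thesis
  proof (cases "card (pairings d (2*m)) = 0")
    case True
    then have "pairings d (2*m) = {}" using finite_pairings by simp
    then show ?thesis using e1 e2 unfolding cm_expect_def by simp
  next
    case False
    then show ?thesis using e1 e2 unfolding cm_expect_def by simp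
  qed
qed


definition Tp :: "nat \<Rightarrow> nat \<Rightarrow> nat \<Rightarrow> nat set \<Rightarrow> ((nat \<Rightarrow> nat) \<times> (nat \<Rightarrow> nat)) set" where
  "Tp d i n S = {(a,b). a \<in> {..<i} \<rightarrow>\<^sub>E cm_points d n \<and> b \<in> {..<i} \<rightarrow>\<^sub>E cm_points d n \<and>
     (\<forall>j<i. cm_cell d (b j) = cm_cell d (a (Suc j mod i)) \<and> b j \<noteq> a (Suc j mod i) \<and> (a j \<in> S \<longleftrightarrow> b j \<notin> S))}"

definition Reps :: "nat \<Rightarrow> nat \<Rightarrow> nat \<Rightarrow> nat set \<Rightarrow> ((nat \<Rightarrow> nat) \<times> (nat \<Rightarrow> nat)) set" where
  "Reps d i n S = {(a,b) \<in> Tp d i n S. inj_on (\<lambda>j. cm_cell d (a j)) {..<i}}"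

definition Cof :: "nat \<Rightarrow> (nat \<Rightarrow> nat) \<Rightarrow> (nat \<Rightarrow> nat) \<Rightarrow> nat set set" where
  "Cof i a b = (\<lambda>j. {a j, b j}) ` {..<i}"

lemma good_disj: "goodpairs X S D \<Longrightarrow> e \<in> D \<Longrightarrow> e' \<in> D \<Longrightarrow> e \<noteq> e' \<Longrightarrow> e \<inter> e' = {}"
  unfolding goodpairs_def by simp

lemma good_elem: "goodpairs X S D \<Longrightarrow> e \<in> D \<Longrightarrow> card e = 2 \<and> e \<subseteq> X \<and> card (e \<inter> S) = 1"
  unfolding goodpairs_def by simp

lemma sucmod: "j < i \<Longrightarrow> Suc j mod i = (if Suc j = i then 0 else Suc j)"
  by (cases "Suc j = i") auto

lemma sucmod_lt: "j < i \<Longrightarrow> Suc j mod i < i"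
  by simp

lemma sucmod_inj: "j < i \<Longrightarrow> l < i \<Longrightarrow> Suc j mod i = Suc l mod i \<Longrightarrow> j = l"
  using sucmod[of j i] sucmod[of l i] by (auto split: if_splits)

lemma finite_Tp: "finite (Tp d i n S)"
proof -
  have "Tp d i n S \<subseteq> ({..<i} \<rightarrow>\<^sub>E cm_points d n) \<times> ({..<i} \<rightarrow>\<^sub>E cm_points d n)"
    unfolding Tp_def by auto
  moreover have "finite (({..<i} \<rightarrow>\<^sub>E cm_points d n) \<times> ({..<i} \<rightarrow>\<^sub>E cm_points d n))"
    by (simp add: finite_PiE cm_points_def)
  ultimately show ?thesis by (rule finite_subset)
qed

lemma finite_Reps: "finite (Reps d i n S)"
  unfolding Reps_def by (rule finite_subset[OF _ finite_Tp]) auto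

lemma TpD:
  assumes "(a,b) \<in> Tp d i n S" "j < i"
  shows "a j \<in> cm_points d n" "b j \<in> cm_points d n"
    "cm_cell d (b j) = cm_cell d (a (Suc j mod i))" "b j \<noteq> a (Suc j mod i)" "(a j \<in> S \<longleftrightarrow> b j \<notin> S)"
  using assms unfolding Tp_def by auto

lemma repD:
  assumes "(a,b) \<in> Reps d i n S" "j < i"
  shows "a j \<in> cm_points d n" "b j \<in> cm_points d n"
    "cm_cell d (b j) = cm_cell d (a (Suc j mod i))" "b j \<noteq> a (Suc j mod i)" "(a j \<in> S \<longleftrightarrow> b j \<notin> S)"
  using assms TpD[of a b d i n S j] unfolding Reps_def by auto

lemma rep_inj_cell:
  assumes "(a,b) \<in> Reps d i n S" "j < i" "l < i" "cm_cell d (a j) = cm_cell d (a l)"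
  shows "j = l"
  using assms unfolding Reps_def inj_on_def by auto

lemma rep_distinct:
  assumes r: "(a,b) \<in> Reps d i n S" and "j < i" "l < i"
  shows "a j \<noteq> b l"
proof
  assume eq: "a j = b l"
  have "cm_cell d (a j) = cm_cell d (a (Suc l mod i))" using repD(3)[OF r \<open>l < i\<close>] eq by simp
  then have "j = Suc l mod i" using rep_inj_cell[OF r] \<open>j < i\<close> \<open>l < i\<close> sucmod_lt by blast
  then show False using repD(4)[OF r \<open>l < i\<close>] eq by simp
qed

lemma rep_inj_a:
  assumes r: "(a,b) \<in> Reps d i n S" and "j < i" "l < i" "a j = a l"
  shows "j = l"
  using rep_inj_cell[OF r] assms by simp

lemma rep_inj_b:
  assumes r: "(a,b) \<in> Reps d i n S" and "j < i" "l < i" "b j = b l"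
  shows "j = l"
proof -
  have "cm_cell d (a (Suc j mod i)) = cm_cell d (a (Suc l mod i))"
    using repD(3)[OF r \<open>j < i\<close>] repD(3)[OF r \<open>l < i\<close>] assms(4) by simp
  then have "Suc j mod i = Suc l mod i" using rep_inj_cell[OF r] sucmod_lt assms(2,3) by blast
  then show ?thesis using sucmod_inj assms(2,3) by blast
qed

lemma Union_Cof: "\<Union>(Cof i a b) = a ` {..<i} \<union> b ` {..<i}"
  unfolding Cof_def by blast

lemma card_doubleton_S:
  assumes "x \<noteq> y" "(x \<in> S \<longleftrightarrow> y \<notin> S)"
  shows "card ({x, y} \<inter> S) = 1"
proof (cases "x \<in> S")
  case True
  then have "{x,y} \<inter> S = {x}" using assms by blast
  then show ?thesis by simp
next
  case False
  then have "{x,y} \<inter> S = {y}" using assms by blast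
  then show ?thesis by simp
qed

lemma Cof_good:
  assumes r: "(a,b) \<in> Reps d i n S"
  shows "Cof i a b \<in> goodcyc d i n S"
proof -
  have ab: "a j \<noteq> b l" if "j < i" "l < i" for j l using rep_distinct[OF r] that by blast
  have inj: "inj_on (\<lambda>j. {a j, b j}) {..<i}"
  proof (rule inj_onI)
    fix j l assume jl: "j \<in> {..<i}" "l \<in> {..<i}" "{a j, b j} = {a l, b l}"
    then have "a j = a l" using ab by (metis doubleton_eq_iff lessThan_iff)
    then show "j = l" using rep_inj_a[OF r] jl by simp
  qed
  have cyc: "is_cycle d i (Cof i a b)"
    unfolding is_cycle_def
  proof (intro exI conjI)
    show "inj_on (\<lambda>j. cm_cell d (a j)) {..<i}" using r unfolding Reps_def by simp
    show "bij_betw (\<lambda>j. {a j, b j}) {..<i} (Cof i a b)" using inj unfolding Cof_def bij_betw_def by simp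
    show "\<forall>j<i. cm_cell d ` {a j, b j} = {cm_cell d (a j), cm_cell d (a ((j + 1) mod i))}"
      using repD(3)[OF r] by simp
  qed
  have gp: "goodpairs (cm_points d n) S (Cof i a b)"
    unfolding goodpairs_def
  proof (intro conjI ballI impI)
    fix e assume "e \<in> Cof i a b"
    then obtain j where j: "j < i" "e = {a j, b j}" unfolding Cof_def by blast
    show "card e = 2" using ab[OF j(1) j(1)] j by simp
    show "e \<subseteq> cm_points d n" using repD(1,2)[OF r j(1)] j by simp
    show "card (e \<inter> S) = 1" using j card_doubleton_S[OF ab[OF j(1) j(1)] repD(5)[OF r j(1)]] by simp
  next
    fix e e' assume "e \<in> Cof i a b" "e' \<in> Cof i a b" "e \<noteq> e'"
    then obtain j l where j: "j < i" "e = {a j, b j}" "l < i" "e' = {a l, b l}" "j \<noteq> l" unfolding Cof_def by blast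
    have "a j \<noteq> a l" using rep_inj_a[OF r] j by blast
    moreover have "b j \<noteq> b l" using rep_inj_b[OF r] j by blast
    moreover have "a j \<noteq> b l" using ab[OF j(1) j(3)] .
    moreover have "b j \<noteq> a l" using ab[OF j(3) j(1)] by auto
    ultimately show "e \<inter> e' = {}" using j by auto
  qed
  show ?thesis unfolding goodcyc_def using cyc gp by blast
qed

lemma good_rep:
  assumes "0 < i" and C: "C \<in> goodcyc d i n S"
  shows "\<exists>a b. (a,b) \<in> Reps d i n S \<and> Cof i a b = C"
proof -
  have gp: "goodpairs (cm_points d n) S C" and cy: "is_cycle d i C" using C unfolding goodcyc_def by auto
  from cy obtain v e where v: "inj_on v {..<i}" and e: "bij_betw e {..<i} C"
    and ve0: "\<forall>j<i. cm_cell d ` (e j) = {v j, v ((j + 1) mod i)}"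
    unfolding is_cycle_def by blast
  have ve: "cm_cell d ` (e j) = {v j, v (Suc j mod i)}" if "j < i" for j
    using ve0 that by simp
  have eC: "e j \<in> C" if "j < i" for j using e that unfolding bij_betw_def by auto
  have c2: "card (e j) = 2" "e j \<subseteq> cm_points d n" "card (e j \<inter> S) = 1" if "j < i" for j
    using good_elem[OF gp eC[OF that]] by auto
  define a where "a = (\<lambda>j\<in>{..<i}. SOME x. x \<in> e j \<and> cm_cell d x = v j)"
  have a: "a j \<in> e j" "cm_cell d (a j) = v j" if "j < i" for j
  proof -
    have "v j \<in> cm_cell d ` (e j)" using ve[OF that] by simp
    then have "\<exists>x. x \<in> e j \<and> cm_cell d x = v j" by auto
    from someI_ex[OF this] have "a j \<in> e j \<and> cm_cell d (a j) = v j" unfolding a_def using that by simp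
    then show "a j \<in> e j" "cm_cell d (a j) = v j" by auto
  qed
  define b where "b = (\<lambda>j\<in>{..<i}. SOME y. y \<in> e j \<and> y \<noteq> a j)"
  have b: "b j \<in> e j" "b j \<noteq> a j" "e j = {a j, b j}" if jj: "j < i" for j
  proof -
    obtain x y where xy: "e j = {x, y}" "x \<noteq> y" using c2(1)[OF jj] by (meson card_2_iff)
    then have "\<exists>y. y \<in> e j \<and> y \<noteq> a j" using a(1)[OF jj] by blast
    from someI_ex[OF this] have "b j \<in> e j \<and> b j \<noteq> a j" unfolding b_def using jj by simp
    then show "b j \<in> e j" "b j \<noteq> a j" by auto
    then show "e j = {a j, b j}" using xy a(1)[OF jj] by auto
  qed
  have sl: "Suc j mod i < i" if "j < i" for j using that by simp
  have R1: "cm_cell d (b j) = cm_cell d (a (Suc j mod i))" if j: "j < i" for j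
  proof -
    have "{v j, cm_cell d (b j)} = {v j, v (Suc j mod i)}"
      using ve[OF j] b(3)[OF j] a(2)[OF j] by simp
    then have "cm_cell d (b j) = v (Suc j mod i)" by (metis doubleton_eq_iff)
    then show ?thesis using a(2)[OF sl[OF j]] by simp
  qed
  have R3: "b j \<noteq> a (Suc j mod i)" if j: "j < i" for j
  proof (cases "Suc j mod i = j")
    case True then show ?thesis using b(2)[OF j] by simp
  next
    case False
    then have "e j \<noteq> e (Suc j mod i)" using e j sl[OF j] unfolding bij_betw_def inj_on_def by blast
    then have "e j \<inter> e (Suc j mod i) = {}" by (rule good_disj[OF gp eC[OF j] eC[OF sl[OF j]]])
    moreover have "b j \<in> e j" "a (Suc j mod i) \<in> e (Suc j mod i)" using b(1)[OF j] a(1)[OF sl[OF j]] by auto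
    ultimately show ?thesis by (metis disjoint_iff)
  qed
  have R4: "a j \<in> S \<longleftrightarrow> b j \<notin> S" if j: "j < i" for j
  proof -
    have "card ({a j, b j} \<inter> S) = 1" using c2(3)[OF j] b(3)[OF j] by simp
    show ?thesis
    proof (rule ccontr)
      assume "\<not> ?thesis"
      then have "{a j, b j} \<inter> S = {a j, b j} \<or> {a j, b j} \<inter> S = {}" by blast
      then have "card ({a j, b j} \<inter> S) \<noteq> 1" using b(2)[OF j] by auto
      then show False using \<open>card ({a j, b j} \<inter> S) = 1\<close> by simp
    qed
  qed
  have Pa: "a \<in> {..<i} \<rightarrow>\<^sub>E cm_points d n"
  proof (subst PiE_iff, intro conjI ballI)
    fix j assume "j \<in> {..<i}"
    then show "a j \<in> cm_points d n" using a(1)[of j] c2(2)[of j] by auto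
  next
    show "a \<in> extensional {..<i}" unfolding a_def by simp
  qed
  have Pb: "b \<in> {..<i} \<rightarrow>\<^sub>E cm_points d n"
  proof (subst PiE_iff, intro conjI ballI)
    fix j assume "j \<in> {..<i}"
    then show "b j \<in> cm_points d n" using b(1)[of j] c2(2)[of j] by auto
  next
    show "b \<in> extensional {..<i}" unfolding b_def by simp
  qed
  have inj: "inj_on (\<lambda>j. cm_cell d (a j)) {..<i}"
    using v a(2) unfolding inj_on_def by simp
  have "(a,b) \<in> Reps d i n S" unfolding Reps_def Tp_def using Pa Pb R1 R3 R4 inj by blast
  moreover have "Cof i a b = C"
  proof -
    have "Cof i a b = e ` {..<i}" unfolding Cof_def using b(3) by (intro image_cong) auto
    then show ?thesis using e unfolding bij_betw_def by simp
  qed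
  ultimately show ?thesis by blast
qed


lemma rep_unique:
  assumes r1: "(a1,b1) \<in> Reps d i n S" and r2: "(a2,b2) \<in> Reps d i n S"
    and C: "Cof i a1 b1 = Cof i a2 b2" and i: "0 < i" and a0: "a1 0 = a2 0"
  shows "a1 = a2 \<and> b1 = b2"
proof -
  have U: "a1 ` {..<i} \<union> b1 ` {..<i} = a2 ` {..<i} \<union> b2 ` {..<i}"
    using C Union_Cof by metis
  have partner: "b1 j = b2 j" if j: "j < i" and eq: "a1 j = a2 j" for j
  proof -
    have "{a1 j, b1 j} \<in> Cof i a2 b2" using C j unfolding Cof_def by auto
    then obtain l where l: "l < i" "{a1 j, b1 j} = {a2 l, b2 l}" unfolding Cof_def by auto
    have "a2 j \<noteq> b2 l" using rep_distinct[OF r2 j l(1)] .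
    then have "a2 j = a2 l" using l(2) eq by (metis doubleton_eq_iff)
    then have "j = l" using rep_inj_a[OF r2 j l(1)] by simp
    then show ?thesis using l(2) eq rep_distinct[OF r1 j j] by (metis doubleton_eq_iff)
  qed
  have nxt: "a1 (Suc j) = a2 (Suc j)" if j: "Suc j < i" and eq: "b1 j = b2 j" for j
  proof -
    have jj: "j < i" using j by simp
    have sm: "Suc j mod i = Suc j" using j by simp
    have cell: "cm_cell d (a1 (Suc j)) = cm_cell d (a2 (Suc j))"
      using repD(3)[OF r1 jj] repD(3)[OF r2 jj] eq sm by simp
    have "a1 (Suc j) \<in> a2 ` {..<i} \<union> b2 ` {..<i}" using U j by blast
    then show ?thesis
    proof
      assume "a1 (Suc j) \<in> a2 ` {..<i}"
      then obtain l where l: "l < i" "a1 (Suc j) = a2 l" by auto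
      then have "l = Suc j" using rep_inj_cell[OF r2 l(1) j] cell by simp
      then show ?thesis using l by simp
    next
      assume "a1 (Suc j) \<in> b2 ` {..<i}"
      then obtain l where l: "l < i" "a1 (Suc j) = b2 l" by auto
      have "cm_cell d (a2 (Suc l mod i)) = cm_cell d (a2 (Suc j))"
        using repD(3)[OF r2 l(1)] l(2) cell by simp
      then have "Suc l mod i = Suc j" using rep_inj_cell[OF r2 _ j] sucmod_lt[OF l(1)] by blast
      then have "Suc l mod i = Suc j mod i" using sm by simp
      then have "l = j" using sucmod_inj[OF l(1) jj] by simp
      then have "a1 (Suc j) = b1 j" using l eq by simp
      then show ?thesis using repD(4)[OF r1 jj] sm by simp
    qed
  qed
  have all: "a1 j = a2 j" if "j < i" for j
    using that
  proof (induction j)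
    case 0 then show ?case using a0 by simp
  next
    case (Suc j)
    then show ?case using nxt partner by simp
  qed
  have "a1 = a2"
    using all r1 r2 unfolding Reps_def Tp_def by (auto intro: PiE_ext)
  moreover have "b1 = b2"
    using all partner r1 r2 unfolding Reps_def Tp_def by (auto intro: PiE_ext)
  ultimately show ?thesis by simp
qed

lemma rot_surj:
  fixes t i :: nat
  assumes "t < i"
  shows "(\<lambda>j. (j + t) mod i) ` {..<i} = {..<i}"
proof (intro equalityI subsetI)
  fix x assume "x \<in> (\<lambda>j. (j + t) mod i) ` {..<i}"
  then obtain j where "x = (j + t) mod i" by blast
  moreover have "0 < i" using assms by simp
  ultimately show "x \<in> {..<i}" by simp
next
  fix l assume l: "l \<in> {..<i}"
  have "((l + i - t) mod i + t) mod i = (l + i - t + t) mod i" by (simp add: mod_add_left_eq)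
  also have "\<dots> = l" using assms l by simp
  finally show "l \<in> (\<lambda>j. (j + t) mod i) ` {..<i}" using assms by (intro image_eqI[where x="(l + i - t) mod i"]) auto
qed

lemma rot_inj:
  fixes t i :: nat
  assumes "t < i"
  shows "inj_on (\<lambda>j. (j + t) mod i) {..<i}"
  using rot_surj[OF assms] by (intro finite_surj_inj) auto

lemma rot_rep:
  assumes r: "(a,b) \<in> Reps d i n S" and t: "t < i"
  defines "a' \<equiv> (\<lambda>j\<in>{..<i}. a ((j + t) mod i))" and "b' \<equiv> (\<lambda>j\<in>{..<i}. b ((j + t) mod i))"
  shows "(a', b') \<in> Reps d i n S" "Cof i a' b' = Cof i a b" "a' 0 = a t"
proof -
  have ip: "0 < i" using t by simp
  have ml: "(j + t) mod i < i" for j using ip by simp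
  have sh: "Suc ((j + t) mod i) mod i = (Suc j mod i + t) mod i" for j
    by (simp add: mod_Suc_eq mod_add_left_eq)
  have Pa: "a' \<in> {..<i} \<rightarrow>\<^sub>E cm_points d n" unfolding a'_def using repD(1)[OF r ml] by simp
  have Pb: "b' \<in> {..<i} \<rightarrow>\<^sub>E cm_points d n" unfolding b'_def using repD(2)[OF r ml] by simp
  have R: "cm_cell d (b' j) = cm_cell d (a' (Suc j mod i)) \<and> b' j \<noteq> a' (Suc j mod i) \<and> (a' j \<in> S \<longleftrightarrow> b' j \<notin> S)"
    if j: "j < i" for j
  proof -
    have "Suc j mod i < i" using j by simp
    then have "a' (Suc j mod i) = a (Suc ((j + t) mod i) mod i)" unfolding a'_def using sh by simp
    moreover have "b' j = b ((j + t) mod i)" "a' j = a ((j + t) mod i)" unfolding a'_def b'_def using j by auto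
    ultimately show ?thesis using repD(3,4,5)[OF r ml] by simp
  qed
  have inj: "inj_on (\<lambda>j. cm_cell d (a' j)) {..<i}"
  proof (rule inj_onI)
    fix j l assume jl: "j \<in> {..<i}" "l \<in> {..<i}" "cm_cell d (a' j) = cm_cell d (a' l)"
    then have "(j + t) mod i = (l + t) mod i" using rep_inj_cell[OF r ml ml] unfolding a'_def by simp
    then show "j = l" using rot_inj[OF t] jl unfolding inj_on_def by blast
  qed
  show "(a', b') \<in> Reps d i n S" unfolding Reps_def Tp_def using Pa Pb R inj by blast
  have "Cof i a' b' = (\<lambda>j. {a j, b j}) ` ((\<lambda>j. (j + t) mod i) ` {..<i})"
    unfolding Cof_def a'_def b'_def image_image by (intro image_cong) auto
  then show "Cof i a' b' = Cof i a b" unfolding rot_surj[OF t] Cof_def .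
  show "a' 0 = a t" unfolding a'_def using t by simp
qed

lemma refl_rep:
  assumes r: "(a,b) \<in> Reps d i n S" and ip: "0 < i"
  defines "a' \<equiv> (\<lambda>j\<in>{..<i}. b (i - 1 - j))" and "b' \<equiv> (\<lambda>j\<in>{..<i}. a (i - 1 - j))"
  shows "(a', b') \<in> Reps d i n S" "Cof i a' b' = Cof i a b" "\<And>t. t < i \<Longrightarrow> a' (i - 1 - t) = b t"
proof -
  have ml: "i - 1 - j < i" for j using ip by simp
  have Pa: "a' \<in> {..<i} \<rightarrow>\<^sub>E cm_points d n" unfolding a'_def using repD(2)[OF r ml] by simp
  have Pb: "b' \<in> {..<i} \<rightarrow>\<^sub>E cm_points d n" unfolding b'_def using repD(1)[OF r ml] by simp
  have key: "Suc (i - 1 - Suc j mod i) mod i = i - 1 - j" if j: "j < i" for j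
  proof (cases "Suc j = i")
    case True then show ?thesis by simp
  next
    case False
    then have "Suc j < i" using j by simp
    then show ?thesis by simp
  qed
  have R: "cm_cell d (b' j) = cm_cell d (a' (Suc j mod i)) \<and> b' j \<noteq> a' (Suc j mod i) \<and> (a' j \<in> S \<longleftrightarrow> b' j \<notin> S)"
    if j: "j < i" for j
  proof -
    have sj: "Suc j mod i < i" using j by simp
    have e1: "a' (Suc j mod i) = b (i - 1 - Suc j mod i)" unfolding a'_def using sj by simp
    have e2: "b' j = a (i - 1 - j)" "a' j = b (i - 1 - j)" unfolding a'_def b'_def using j by auto
    have c: "cm_cell d (b (i - 1 - Suc j mod i)) = cm_cell d (a (i - 1 - j))"
      using repD(3)[OF r ml[of "Suc j mod i"]] key[OF j] by simp
    show ?thesis using e1 e2 c rep_distinct[OF r ml ml] repD(5)[OF r ml[of j]] by auto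
  qed
  have inj: "inj_on (\<lambda>j. cm_cell d (a' j)) {..<i}"
  proof (rule inj_onI)
    fix j l assume jl: "j \<in> {..<i}" "l \<in> {..<i}" "cm_cell d (a' j) = cm_cell d (a' l)"
    then have "cm_cell d (b (i - 1 - j)) = cm_cell d (b (i - 1 - l))" unfolding a'_def by simp
    then have "cm_cell d (a (Suc (i - 1 - j) mod i)) = cm_cell d (a (Suc (i - 1 - l) mod i))"
      using repD(3)[OF r ml] by simp
    then have "Suc (i - 1 - j) mod i = Suc (i - 1 - l) mod i"
      using rep_inj_cell[OF r] sucmod_lt[OF ml] by blast
    then have "i - 1 - j = i - 1 - l" using sucmod_inj[OF ml ml] by blast
    then show "j = l" using jl by simp
  qed
  show "(a', b') \<in> Reps d i n S" unfolding Reps_def Tp_def using Pa Pb R inj by blast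
  have im: "(\<lambda>j. i - 1 - j) ` {..<i} = {..<i}"
  proof (intro equalityI subsetI)
    fix x assume "x \<in> (\<lambda>j. i - 1 - j) ` {..<i}" then show "x \<in> {..<i}" using ip by auto
  next
    fix x assume "x \<in> {..<i}" then show "x \<in> (\<lambda>j. i - 1 - j) ` {..<i}"
      by (intro image_eqI[where x="i - 1 - x"]) auto
  qed
  have "Cof i a' b' = (\<lambda>j. {a j, b j}) ` ((\<lambda>j. i - 1 - j) ` {..<i})"
    unfolding Cof_def a'_def b'_def image_image by (intro image_cong) auto
  then show "Cof i a' b' = Cof i a b" unfolding im Cof_def .
  show "\<And>t. t < i \<Longrightarrow> a' (i - 1 - t) = b t" unfolding a'_def by simp
qed

lemma rep_reach:
  assumes r: "(a,b) \<in> Reps d i n S" and ip: "0 < i" and x: "x \<in> a ` {..<i} \<union> b ` {..<i}"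
  shows "\<exists>a' b'. (a', b') \<in> Reps d i n S \<and> Cof i a' b' = Cof i a b \<and> a' 0 = x"
  using x
proof
  assume "x \<in> a ` {..<i}"
  then obtain t where t: "t < i" "x = a t" by auto
  show ?thesis using rot_rep[OF r t(1)] t by blast
next
  assume "x \<in> b ` {..<i}"
  then obtain t where t: "t < i" "x = b t" by auto
  note R = refl_rep[OF r ip]
  have t': "i - 1 - t < i" using t by simp
  note Q = rot_rep[OF R(1) t']
  have c: "Cof i (\<lambda>j\<in>{..<i}. (\<lambda>j\<in>{..<i}. b (i - 1 - j)) ((j + (i - 1 - t)) mod i))
     (\<lambda>j\<in>{..<i}. (\<lambda>j\<in>{..<i}. a (i - 1 - j)) ((j + (i - 1 - t)) mod i)) = Cof i a b"
    using Q(2) R(2) by simp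
  have z: "(\<lambda>j\<in>{..<i}. (\<lambda>j\<in>{..<i}. b (i - 1 - j)) ((j + (i - 1 - t)) mod i)) 0 = x"
    using Q(3) R(3)[OF t(1)] t(2) by simp
  show ?thesis using Q(1) c z by blast
qed


lemma fiber_card:
  assumes ip: "0 < i" and r0: "(a0,b0) \<in> Reps d i n S"
  shows "card {r \<in> Reps d i n S. Cof i (fst r) (snd r) = Cof i a0 b0} = 2 * i"
proof -
  let ?F = "{r \<in> Reps d i n S. Cof i (fst r) (snd r) = Cof i a0 b0}"
  let ?U = "a0 ` {..<i} \<union> b0 ` {..<i}"
  have "bij_betw (\<lambda>r. fst r 0) ?F ?U"
    unfolding bij_betw_def
  proof
    show "inj_on (\<lambda>r. fst r 0) ?F"
    proof (rule inj_onI)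
      fix r1 r2 assume r1: "r1 \<in> ?F" and r2: "r2 \<in> ?F" and eq: "fst r1 0 = fst r2 0"
      obtain a1 b1 where e1: "r1 = (a1, b1)" by fastforce
      obtain a2 b2 where e2: "r2 = (a2, b2)" by fastforce
      have "a1 = a2 \<and> b1 = b2"
        using r1 r2 eq e1 e2 by (intro rep_unique[of a1 b1 d i n S a2 b2 ]) (use ip in auto)
      then show "r1 = r2" using e1 e2 by simp
    qed
    show "(\<lambda>r. fst r 0) ` ?F = ?U"
    proof (intro equalityI subsetI)
      fix x assume "x \<in> (\<lambda>r. fst r 0) ` ?F"
      then obtain a b where ab: "(a,b) \<in> Reps d i n S" "Cof i a b = Cof i a0 b0" "x = a 0" by auto
      have "x \<in> \<Union>(Cof i a b)" using ab(3) ip unfolding Union_Cof by auto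
      then show "x \<in> ?U" using ab(2) Union_Cof by metis
    next
      fix x assume "x \<in> ?U"
      from rep_reach[OF r0 ip this] obtain a' b' where
        "(a', b') \<in> Reps d i n S" "Cof i a' b' = Cof i a0 b0" "a' 0 = x" by blast
      then show "x \<in> (\<lambda>r. fst r 0) ` ?F" by (intro image_eqI[where x="(a',b')"]) auto
    qed
  qed
  then have "card ?F = card ?U" by (rule bij_betw_same_card)
  also have "\<dots> = card (a0 ` {..<i}) + card (b0 ` {..<i})"
    using rep_distinct[OF r0] by (intro card_Un_disjoint) auto
  also have "\<dots> = i + i"
  proof -
    have "inj_on a0 {..<i}" using rep_inj_a[OF r0] unfolding inj_on_def by blast
    moreover have "inj_on b0 {..<i}" using rep_inj_b[OF r0] unfolding inj_on_def by blast
    ultimately show ?thesis by (simp add: card_image)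
  qed
  finally show ?thesis by simp
qed

lemma finite_goodcyc: "finite (goodcyc d i n S)"
proof -
  have "goodcyc d i n S \<subseteq> Pow (Pow (cm_points d n))"
    unfolding goodcyc_def goodpairs_def by blast
  then show ?thesis by (rule finite_subset) (simp add: cm_points_def)
qed

lemma reps_card:
  assumes ip: "0 < i"
  shows "card (Reps d i n S) = 2 * i * card (goodcyc d i n S)"
proof -
  have eq: "Reps d i n S = (\<Union>C\<in>goodcyc d i n S. {r \<in> Reps d i n S. Cof i (fst r) (snd r) = C})"
  proof (intro equalityI subsetI)
    fix r assume "r \<in> Reps d i n S"
    moreover obtain a b where "r = (a,b)" by fastforce
    ultimately show "r \<in> (\<Union>C\<in>goodcyc d i n S. {r \<in> Reps d i n S. Cof i (fst r) (snd r) = C})"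
      using Cof_good by auto
  qed blast
  have "card (Reps d i n S) = card (\<Union>C\<in>goodcyc d i n S. {r \<in> Reps d i n S. Cof i (fst r) (snd r) = C})"
    by (rule arg_cong[OF eq])
  also have "\<dots> = (\<Sum>C\<in>goodcyc d i n S. card {r \<in> Reps d i n S. Cof i (fst r) (snd r) = C})"
    by (intro card_UN_disjoint finite_goodcyc) (auto simp: finite_Reps)
  also have "\<dots> = (\<Sum>C\<in>goodcyc d i n S. 2 * i)"
  proof (rule sum.cong[OF refl])
    fix C assume "C \<in> goodcyc d i n S"
    from good_rep[OF ip this] obtain a b where "(a,b) \<in> Reps d i n S" "Cof i a b = C" by blast
    then show "card {r \<in> Reps d i n S. Cof i (fst r) (snd r) = C} = 2 * i"
      using fiber_card[OF ip] by blast
  qed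
  finally show ?thesis by simp
qed


definition Qs :: "nat \<Rightarrow> nat \<Rightarrow> nat set \<Rightarrow> bool \<Rightarrow> bool \<Rightarrow> (nat \<times> nat) set" where
  "Qs d n S t t' = {(x,y). x \<in> cm_points d n \<and> y \<in> cm_points d n \<and> cm_cell d x = cm_cell d y \<and> x \<noteq> y
      \<and> (x \<in> S \<longleftrightarrow> t) \<and> (y \<in> S \<longleftrightarrow> t')}"

definition Tps where
  "Tps d i n S s = {(a,b) \<in> Tp d i n S. \<forall>j<i. a j \<in> S \<longleftrightarrow> s j}"

lemma pred_suc:
  assumes "j < i"
  shows "Suc ((j + (i - 1)) mod i) mod i = j" "(Suc j mod i + (i - 1)) mod i = j"
proof -
  have i: "Suc (j + (i - 1)) = j + i" using assms by simp
  have "Suc ((j + (i - 1)) mod i) mod i = Suc (j + (i - 1)) mod i" by (rule mod_Suc_eq)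
  also have "\<dots> = (j + i) mod i" using i by (simp only:)
  also have "\<dots> = j" using assms by simp
  finally show "Suc ((j + (i - 1)) mod i) mod i = j" .
  have "(Suc j mod i + (i - 1)) mod i = (Suc j + (i - 1)) mod i" by (simp add: mod_add_left_eq)
  also have "\<dots> = (j + i) mod i" using i by (simp only: plus_nat.simps)
  also have "\<dots> = j" using assms by simp
  finally show "(Suc j mod i + (i - 1)) mod i = j" .
qed

lemma Tps_bij:
  assumes ip: "0 < i"
  shows "bij_betw (\<lambda>(a,b). \<lambda>j\<in>{..<i}. (b j, a (Suc j mod i))) (Tps d i n S s)
           (\<Pi>\<^sub>E j\<in>{..<i}. Qs d n S (\<not> s j) (s (Suc j mod i)))"
proof (rule bij_betw_byWitness[where f' = "\<lambda>w. (\<lambda>j\<in>{..<i}. snd (w ((j + (i - 1)) mod i)), \<lambda>j\<in>{..<i}. fst (w j))"])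
  have ml: "(j + (i - 1)) mod i < i" for j using ip by simp
  show "\<forall>r\<in>Tps d i n S s. (\<lambda>w. (\<lambda>j\<in>{..<i}. snd (w ((j + (i - 1)) mod i)), \<lambda>j\<in>{..<i}. fst (w j)))
           ((\<lambda>(a,b). \<lambda>j\<in>{..<i}. (b j, a (Suc j mod i))) r) = r"
  proof
    fix r assume r: "r \<in> Tps d i n S s"
    obtain a b where ab: "r = (a,b)" by fastforce
    have ext: "a \<in> extensional {..<i}" "b \<in> extensional {..<i}"
      using r ab unfolding Tps_def Tp_def by (auto simp: PiE_iff)
    have "(\<lambda>j\<in>{..<i}. snd ((\<lambda>j\<in>{..<i}. (b j, a (Suc j mod i))) ((j + (i - 1)) mod i))) = a"
      using ext(1) ml pred_suc(1) by (intro extensionalityI[OF _ ext(1)]) auto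
    moreover have "(\<lambda>j\<in>{..<i}. fst ((\<lambda>j\<in>{..<i}. (b j, a (Suc j mod i))) j)) = b"
      by (intro extensionalityI[OF _ ext(2)]) auto
    ultimately show "(\<lambda>w. (\<lambda>j\<in>{..<i}. snd (w ((j + (i - 1)) mod i)), \<lambda>j\<in>{..<i}. fst (w j)))
           ((\<lambda>(a,b). \<lambda>j\<in>{..<i}. (b j, a (Suc j mod i))) r) = r" using ab by simp
  qed
  show "\<forall>w\<in>\<Pi>\<^sub>E j\<in>{..<i}. Qs d n S (\<not> s j) (s (Suc j mod i)).
      (\<lambda>(a,b). \<lambda>j\<in>{..<i}. (b j, a (Suc j mod i)))
        ((\<lambda>w. (\<lambda>j\<in>{..<i}. snd (w ((j + (i - 1)) mod i)), \<lambda>j\<in>{..<i}. fst (w j))) w) = w"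
  proof
    fix w assume w: "w \<in> (\<Pi>\<^sub>E j\<in>{..<i}. Qs d n S (\<not> s j) (s (Suc j mod i)))"
    have ext: "w \<in> extensional {..<i}" using w by (simp add: PiE_iff)
    have "(\<lambda>j\<in>{..<i}. ((\<lambda>j\<in>{..<i}. fst (w j)) j, (\<lambda>j\<in>{..<i}. snd (w ((j + (i - 1)) mod i))) (Suc j mod i))) = w"
      using pred_suc(2) by (intro extensionalityI[OF _ ext]) auto
    then show "(\<lambda>(a,b). \<lambda>j\<in>{..<i}. (b j, a (Suc j mod i)))
        ((\<lambda>w. (\<lambda>j\<in>{..<i}. snd (w ((j + (i - 1)) mod i)), \<lambda>j\<in>{..<i}. fst (w j))) w) = w" by simp
  qed
  show "(\<lambda>(a,b). \<lambda>j\<in>{..<i}. (b j, a (Suc j mod i))) ` Tps d i n S s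
      \<subseteq> (\<Pi>\<^sub>E j\<in>{..<i}. Qs d n S (\<not> s j) (s (Suc j mod i)))"
  proof
    fix w assume "w \<in> (\<lambda>(a,b). \<lambda>j\<in>{..<i}. (b j, a (Suc j mod i))) ` Tps d i n S s"
    then obtain a b where ab: "(a,b) \<in> Tps d i n S s" and w: "w = (\<lambda>j\<in>{..<i}. (b j, a (Suc j mod i)))" by auto
    have T: "(a,b) \<in> Tp d i n S" and sj: "\<And>j. j < i \<Longrightarrow> a j \<in> S \<longleftrightarrow> s j" using ab unfolding Tps_def by auto
    have "(b j, a (Suc j mod i)) \<in> Qs d n S (\<not> s j) (s (Suc j mod i))" if j: "j < i" for j
      using TpD[OF T j] TpD(1)[OF T sucmod_lt[OF j]] sj[OF j] sj[OF sucmod_lt[OF j]] unfolding Qs_def by auto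
    then show "w \<in> (\<Pi>\<^sub>E j\<in>{..<i}. Qs d n S (\<not> s j) (s (Suc j mod i)))" using w by simp
  qed
  show "(\<lambda>w. (\<lambda>j\<in>{..<i}. snd (w ((j + (i - 1)) mod i)), \<lambda>j\<in>{..<i}. fst (w j))) `
      (\<Pi>\<^sub>E j\<in>{..<i}. Qs d n S (\<not> s j) (s (Suc j mod i))) \<subseteq> Tps d i n S s"
  proof
    fix r assume "r \<in> (\<lambda>w. (\<lambda>j\<in>{..<i}. snd (w ((j + (i - 1)) mod i)), \<lambda>j\<in>{..<i}. fst (w j))) `
      (\<Pi>\<^sub>E j\<in>{..<i}. Qs d n S (\<not> s j) (s (Suc j mod i)))"
    then obtain w where w: "w \<in> (\<Pi>\<^sub>E j\<in>{..<i}. Qs d n S (\<not> s j) (s (Suc j mod i)))"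
      and r: "r = (\<lambda>w. (\<lambda>j\<in>{..<i}. snd (w ((j + (i - 1)) mod i)), \<lambda>j\<in>{..<i}. fst (w j))) w" by blast
    define a where "a = (\<lambda>j\<in>{..<i}. snd (w ((j + (i - 1)) mod i)))"
    define b where "b = (\<lambda>j\<in>{..<i}. fst (w j))"
    have r2: "r = (a, b)" using r a_def b_def by simp
    have wQ: "w j \<in> Qs d n S (\<not> s j) (s (Suc j mod i))" if "j < i" for j using w that by auto
    have wa: "a (Suc j mod i) = snd (w j)" if "j < i" for j
      unfolding a_def using pred_suc(2)[OF that] sucmod_lt[OF that] by simp
    have aj: "a j = snd (w ((j + (i - 1)) mod i))" if "j < i" for j unfolding a_def using that by simp
    have bj: "b j = fst (w j)" if "j < i" for j unfolding b_def using that by simp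
    have wP: "fst (w k) \<in> cm_points d n \<and> snd (w k) \<in> cm_points d n" if "k < i" for k
      using wQ[OF that] unfolding Qs_def by (cases "w k") auto
    have Pa: "a \<in> {..<i} \<rightarrow>\<^sub>E cm_points d n" unfolding a_def
      using wP[OF ml] by auto
    have Pb: "b \<in> {..<i} \<rightarrow>\<^sub>E cm_points d n" unfolding b_def
      using wP by auto
    have R: "cm_cell d (b j) = cm_cell d (a (Suc j mod i)) \<and> b j \<noteq> a (Suc j mod i) \<and> (a j \<in> S \<longleftrightarrow> b j \<notin> S)
       \<and> (a j \<in> S \<longleftrightarrow> s j)" if j: "j < i" for j
    proof -
      have q1: "w j \<in> Qs d n S (\<not> s j) (s (Suc j mod i))" using wQ[OF j] .
      have q2: "w ((j + (i - 1)) mod i) \<in> Qs d n S (\<not> s ((j + (i - 1)) mod i)) (s j)"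
        using wQ[OF ml[of j]] pred_suc(1)[OF j] by simp
      have "a j \<in> S \<longleftrightarrow> s j" using q2 aj[OF j] unfolding Qs_def by auto
      moreover have "b j \<in> S \<longleftrightarrow> \<not> s j" using q1 bj[OF j] unfolding Qs_def by auto
      moreover have "cm_cell d (b j) = cm_cell d (a (Suc j mod i)) \<and> b j \<noteq> a (Suc j mod i)"
        using q1 bj[OF j] wa[OF j] unfolding Qs_def by auto
      ultimately show ?thesis by blast
    qed
    show "r \<in> Tps d i n S s" unfolding r2 Tps_def Tp_def using Pa Pb R by auto
  qed
qed

lemma card_Tps:
  assumes ip: "0 < i"
  shows "card (Tps d i n S s) = (\<Prod>j<i. card (Qs d n S (\<not> s j) (s (Suc j mod i))))"
  using bij_betw_same_card[OF Tps_bij[OF ip]] by (simp add: card_PiE)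

lemma card_Tp:
  assumes ip: "0 < i"
  shows "card (Tp d i n S) = (\<Sum>s\<in>{..<i} \<rightarrow>\<^sub>E (UNIV :: bool set). \<Prod>j<i. card (Qs d n S (\<not> s j) (s (Suc j mod i))))"
proof -
  have eq: "Tp d i n S = (\<Union>s\<in>{..<i} \<rightarrow>\<^sub>E (UNIV :: bool set). Tps d i n S s)"
  proof (intro equalityI subsetI)
    fix r assume r: "r \<in> Tp d i n S"
    obtain a b where ab: "r = (a,b)" by fastforce
    have "r \<in> Tps d i n S (\<lambda>j\<in>{..<i}. a j \<in> S)" using r ab unfolding Tps_def by auto
    moreover have "(\<lambda>j\<in>{..<i}. a j \<in> S) \<in> {..<i} \<rightarrow>\<^sub>E (UNIV :: bool set)" by simp
    ultimately show "r \<in> (\<Union>s\<in>{..<i} \<rightarrow>\<^sub>E (UNIV :: bool set). Tps d i n S s)" by blast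
  qed (auto simp: Tps_def)
  have "card (Tp d i n S) = card (\<Union>s\<in>{..<i} \<rightarrow>\<^sub>E (UNIV :: bool set). Tps d i n S s)"
    by (rule arg_cong[OF eq])
  also have "\<dots> = (\<Sum>s\<in>{..<i} \<rightarrow>\<^sub>E (UNIV :: bool set). card (Tps d i n S s))"
  proof (rule card_UN_disjoint)
    show "finite ({..<i} \<rightarrow>\<^sub>E (UNIV :: bool set))" by (simp add: finite_PiE)
    show "\<forall>s\<in>{..<i} \<rightarrow>\<^sub>E UNIV. finite (Tps d i n S s)"
      unfolding Tps_def by (auto intro: finite_subset[OF _ finite_Tp])
    show "\<forall>s\<in>{..<i} \<rightarrow>\<^sub>E UNIV. \<forall>s'\<in>{..<i} \<rightarrow>\<^sub>E UNIV. s \<noteq> s' \<longrightarrow> Tps d i n S s \<inter> Tps d i n S s' = {}"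
    proof (intro ballI impI)
      fix s s' :: "nat \<Rightarrow> bool" assume s: "s \<in> {..<i} \<rightarrow>\<^sub>E UNIV" "s' \<in> {..<i} \<rightarrow>\<^sub>E UNIV" "s \<noteq> s'"
      show "Tps d i n S s \<inter> Tps d i n S s' = {}"
      proof (rule ccontr)
        assume "\<not> ?thesis"
        then obtain a b where "(a,b) \<in> Tps d i n S s" "(a,b) \<in> Tps d i n S s'" by auto
        then have "\<forall>j<i. s j = s' j" unfolding Tps_def by auto
        then have "s = s'" using s by (intro PiE_ext[OF s(1) s(2)]) auto
        then show False using s by simp
      qed
    qed
  qed
  also have "\<dots> = (\<Sum>s\<in>{..<i} \<rightarrow>\<^sub>E (UNIV :: bool set). \<Prod>j<i. card (Qs d n S (\<not> s j) (s (Suc j mod i))))"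
    using card_Tps[OF ip] by simp
  finally show ?thesis .
qed


definition hc :: "nat \<Rightarrow> nat \<Rightarrow> nat set \<Rightarrow> nat \<Rightarrow> nat" where
  "hc d n S v = card {x \<in> cm_points d n. cm_cell d x = v \<and> x \<in> S}"

definition Xs :: "nat \<Rightarrow> nat \<Rightarrow> nat set \<Rightarrow> nat \<Rightarrow> bool \<Rightarrow> nat set" where
  "Xs d n S v t = {x \<in> cm_points d n. cm_cell d x = v \<and> (x \<in> S \<longleftrightarrow> t)}"

definition ff :: "nat \<Rightarrow> bool \<Rightarrow> bool \<Rightarrow> nat \<Rightarrow> nat" where
  "ff d t t' h = (if t then h else d - h) * (if t' then h else d - h) - (if t = t' then (if t then h else d - h) else 0)"

lemma div_char: "0 < (d::nat) \<Longrightarrow> (x div d = v) = (d*v \<le> x \<and> x < d*v + d)"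
  by (metis add.commute div_nat_eqI dividend_less_times_div mult_Suc_right times_div_less_eq_dividend)

lemma cell_set:
  assumes "0 < d" "v < n"
  shows "{x \<in> cm_points d n. cm_cell d x = v} = {d*v..<d*v+d}"
proof -
  have "d*v + d \<le> d * n" using assms by (metis Suc_leI mult_Suc_right mult_le_mono2 add.commute)
  then show ?thesis unfolding cm_points_def cm_cell_def using div_char[OF assms(1)] by auto
qed

lemma card_cell: "0 < d \<Longrightarrow> v < n \<Longrightarrow> card {x \<in> cm_points d n. cm_cell d x = v} = d"
  using cell_set by simp

lemma card_Xs:
  assumes "0 < d" "v < n"
  shows "card (Xs d n S v t) = (if t then hc d n S v else d - hc d n S v)"
proof (cases t)
  case True
  then show ?thesis unfolding Xs_def hc_def by simp
next
  case False
  have "Xs d n S v t = {x \<in> cm_points d n. cm_cell d x = v} - {x \<in> cm_points d n. cm_cell d x = v \<and> x \<in> S}"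
    unfolding Xs_def using False by blast
  moreover have "card ({x \<in> cm_points d n. cm_cell d x = v} - {x \<in> cm_points d n. cm_cell d x = v \<and> x \<in> S})
     = card {x \<in> cm_points d n. cm_cell d x = v} - card {x \<in> cm_points d n. cm_cell d x = v \<and> x \<in> S}"
    by (rule card_Diff_subset) (auto simp: cm_points_def)
  ultimately show ?thesis using card_cell[OF assms] False unfolding hc_def by simp
qed

lemma finite_Xs: "finite (Xs d n S v t)"
  unfolding Xs_def cm_points_def by simp

lemma card_Qv:
  assumes "0 < d" "v < n"
  shows "card {(x,y). x \<in> Xs d n S v t \<and> y \<in> Xs d n S v t' \<and> x \<noteq> y} = ff d t t' (hc d n S v)"
proof -
  let ?X = "Xs d n S v t" and ?Y = "Xs d n S v t'"
  have eq: "{(x,y). x \<in> ?X \<and> y \<in> ?Y \<and> x \<noteq> y} = (?X \<times> ?Y) - (\<lambda>x. (x,x)) ` (?X \<inter> ?Y)" by auto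
  have "card ((?X \<times> ?Y) - (\<lambda>x. (x,x)) ` (?X \<inter> ?Y)) = card (?X \<times> ?Y) - card ((\<lambda>x. (x,x)) ` (?X \<inter> ?Y))"
    by (rule card_Diff_subset) (auto simp: finite_Xs)
  also have "\<dots> = card ?X * card ?Y - card (?X \<inter> ?Y)"
    by (simp add: card_cartesian_product card_image inj_on_def)
  also have "card (?X \<inter> ?Y) = (if t = t' then card ?X else 0)"
  proof (cases "t = t'")
    case True then show ?thesis by simp
  next
    case False
    then have "?X \<inter> ?Y = {}" unfolding Xs_def by blast
    then show ?thesis using False by simp
  qed
  finally show ?thesis unfolding eq ff_def using card_Xs[OF assms] by simp
qed

lemma card_Qs:
  assumes "0 < d"
  shows "card (Qs d n S t t') = (\<Sum>v<n. ff d t t' (hc d n S v))"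
proof -
  have eq: "Qs d n S t t' = (\<Union>v<n. {(x,y). x \<in> Xs d n S v t \<and> y \<in> Xs d n S v t' \<and> x \<noteq> y})"
  proof (intro equalityI subsetI)
    fix z assume z: "z \<in> Qs d n S t t'"
    obtain x y where xy: "z = (x,y)" by fastforce
    have "x < d * n" using z xy unfolding Qs_def cm_points_def by auto
    then have "cm_cell d x < n" unfolding cm_cell_def by (simp add: less_mult_imp_div_less mult.commute)
    then show "z \<in> (\<Union>v<n. {(x,y). x \<in> Xs d n S v t \<and> y \<in> Xs d n S v t' \<and> x \<noteq> y})"
      using z xy unfolding Qs_def Xs_def by auto
  next
    fix z assume "z \<in> (\<Union>v<n. {(x,y). x \<in> Xs d n S v t \<and> y \<in> Xs d n S v t' \<and> x \<noteq> y})"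
    then show "z \<in> Qs d n S t t'" unfolding Qs_def Xs_def by auto
  qed
  have "card (Qs d n S t t') = card (\<Union>v<n. {(x,y). x \<in> Xs d n S v t \<and> y \<in> Xs d n S v t' \<and> x \<noteq> y})"
    by (rule arg_cong[OF eq])
  also have "\<dots> = (\<Sum>v<n. card {(x,y). x \<in> Xs d n S v t \<and> y \<in> Xs d n S v t' \<and> x \<noteq> y})"
  proof (rule card_UN_disjoint)
    show "\<forall>v\<in>{..<n}. finite {(x,y). x \<in> Xs d n S v t \<and> y \<in> Xs d n S v t' \<and> x \<noteq> y}"
    proof
      fix v
      have "{(x,y). x \<in> Xs d n S v t \<and> y \<in> Xs d n S v t' \<and> x \<noteq> y} \<subseteq> Xs d n S v t \<times> Xs d n S v t'" by auto
      then show "finite {(x,y). x \<in> Xs d n S v t \<and> y \<in> Xs d n S v t' \<and> x \<noteq> y}"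
        by (rule finite_subset) (simp add: finite_Xs)
    qed
  qed (auto simp: Xs_def)
  also have "\<dots> = (\<Sum>v<n. ff d t t' (hc d n S v))"
    using card_Qv[OF assms] by simp
  finally show ?thesis .
qed


definition gg :: "real \<Rightarrow> real \<Rightarrow> bool \<Rightarrow> bool \<Rightarrow> real" where
  "gg \<alpha> \<beta> u v = (if u = v then \<alpha> else \<beta>)"

fun pe :: "real \<Rightarrow> real \<Rightarrow> bool \<Rightarrow> bool list \<Rightarrow> bool \<Rightarrow> real" where
  "pe \<alpha> \<beta> x [] y = gg \<alpha> \<beta> x y"
| "pe \<alpha> \<beta> x (z # zs) y = gg \<alpha> \<beta> x z * pe \<alpha> \<beta> z zs y"

lemma len_set: "{xs :: bool list. length xs = n} = {xs. set xs \<subseteq> UNIV \<and> length xs = n}" by simp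

lemma finite_len: "finite {xs :: bool list. length xs = n}"
  unfolding len_set by (rule finite_lists_length_eq) simp

lemma sum_len_Suc:
  "(\<Sum>xs\<in>{xs :: bool list. length xs = Suc n}. f xs) = (\<Sum>x\<in>UNIV. \<Sum>zs\<in>{zs. length zs = n}. f (x # zs))"
proof -
  have "{xs :: bool list. length xs = Suc n} = (\<lambda>(zs, x). x # zs) ` ({zs. length zs = n} \<times> UNIV)"
    using lists_length_Suc_eq[of UNIV n] by simp
  then have "(\<Sum>xs\<in>{xs :: bool list. length xs = Suc n}. f xs) = (\<Sum>(zs,x)\<in>{zs. length zs = n} \<times> UNIV. f (x # zs))"
    by (simp add: sum.reindex inj_on_def split_def)
  also have "\<dots> = (\<Sum>zs\<in>{zs. length zs = n}. \<Sum>x\<in>UNIV. f (x # zs))"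
    by (simp only: sum.cartesian_product)
  also have "\<dots> = (\<Sum>x\<in>UNIV. \<Sum>zs\<in>{zs. length zs = n}. f (x # zs))"
    by (rule sum.swap)
  finally show ?thesis .
qed

lemma pe_sum:
  "(\<Sum>zs\<in>{zs :: bool list. length zs = n}. pe \<alpha> \<beta> x zs y)
     = ((\<alpha> + \<beta>) ^ Suc n + (if x = y then 1 else -1) * (\<alpha> - \<beta>) ^ Suc n) / 2"
proof (induction n arbitrary: x)
  case 0
  have "{zs :: bool list. length zs = 0} = {[]}" by auto
  then show ?case by (simp add: gg_def)
next
  case (Suc n)
  have "(\<Sum>zs\<in>{zs :: bool list. length zs = Suc n}. pe \<alpha> \<beta> x zs y)
      = (\<Sum>z\<in>UNIV. \<Sum>zs\<in>{zs. length zs = n}. gg \<alpha> \<beta> x z * pe \<alpha> \<beta> z zs y)"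
    by (simp add: sum_len_Suc)
  also have "\<dots> = (\<Sum>z\<in>UNIV. gg \<alpha> \<beta> x z * (((\<alpha> + \<beta>) ^ Suc n + (if z = y then 1 else -1) * (\<alpha> - \<beta>) ^ Suc n) / 2))"
    by (simp add: sum_distrib_left[symmetric] Suc.IH)
  also have "\<dots> = ((\<alpha> + \<beta>) ^ Suc (Suc n) + (if x = y then 1 else -1) * (\<alpha> - \<beta>) ^ Suc (Suc n)) / 2"
    by (cases x; cases y) (simp_all add: UNIV_bool gg_def field_simps)
  finally show ?case .
qed

lemma pe_prod:
  "pe \<alpha> \<beta> x zs y = (\<Prod>j<Suc (length zs). gg \<alpha> \<beta> ((x # zs @ [y]) ! j) ((x # zs @ [y]) ! Suc j))"
proof (induction zs arbitrary: x)
  case Nil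
  then show ?case by (simp del: prod.lessThan_Suc)
next
  case (Cons z zs)
  have "(\<Prod>j<Suc (length (z # zs)). gg \<alpha> \<beta> ((x # (z # zs) @ [y]) ! j) ((x # (z # zs) @ [y]) ! Suc j))
     = gg \<alpha> \<beta> x z * (\<Prod>j<Suc (length zs). gg \<alpha> \<beta> ((z # zs @ [y]) ! j) ((z # zs @ [y]) ! Suc j))"
    by (subst prod.lessThan_Suc_shift) (simp del: prod.lessThan_Suc)
  then show ?case using Cons.IH by (simp del: prod.lessThan_Suc)
qed

lemma cyc_pe:
  assumes "length xs = Suc n"
  shows "(\<Prod>j<Suc n. gg \<alpha> \<beta> (xs ! j) (xs ! (Suc j mod Suc n))) = pe \<alpha> \<beta> (hd xs) (tl xs) (hd xs)"
proof -
  obtain x zs where xs: "xs = x # zs" using assms by (cases xs) auto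
  have lz: "length zs = n" using assms xs by simp
  have "pe \<alpha> \<beta> (hd xs) (tl xs) (hd xs) = (\<Prod>j<Suc n. gg \<alpha> \<beta> ((x # zs @ [x]) ! j) ((x # zs @ [x]) ! Suc j))"
    using pe_prod[of \<alpha> \<beta> x zs x] xs lz by (simp del: prod.lessThan_Suc)
  also have "\<dots> = (\<Prod>j<Suc n. gg \<alpha> \<beta> (xs ! j) (xs ! (Suc j mod Suc n)))"
  proof (rule prod.cong[OF refl])
    fix j assume j: "j \<in> {..<Suc n}"
    have a: "(x # zs @ [x]) ! j = xs ! j" using j xs lz by (simp add: nth_append nth_Cons split: nat.splits)
    have b: "(x # zs @ [x]) ! Suc j = xs ! (Suc j mod Suc n)"
    proof (cases "Suc j = Suc n")
      case True then show ?thesis using xs lz by (simp add: nth_append)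
    next
      case False then have "Suc j < Suc n" using j by simp
      then show ?thesis using xs lz by (simp add: nth_append)
    qed
    show "gg \<alpha> \<beta> ((x # zs @ [x]) ! j) ((x # zs @ [x]) ! Suc j) = gg \<alpha> \<beta> (xs ! j) (xs ! (Suc j mod Suc n))"
      using a b by simp
  qed
  finally show ?thesis by simp
qed

lemma PiE_lists_sum:
  "(\<Sum>s\<in>{..<i} \<rightarrow>\<^sub>E (UNIV :: bool set). F (\<lambda>j. s j)) = (\<Sum>xs\<in>{xs :: bool list. length xs = i}. F (\<lambda>j. xs ! j))"
  if "\<And>s s'. (\<And>j. j < i \<Longrightarrow> s j = s' j) \<Longrightarrow> F s = F s'"
proof (rule sum.reindex_bij_witness[where i = "\<lambda>xs. \<lambda>j\<in>{..<i}. xs ! j" and j = "\<lambda>s. map s [0..<i]"])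
  fix s assume s: "s \<in> {..<i} \<rightarrow>\<^sub>E (UNIV :: bool set)"
  show "(\<lambda>j\<in>{..<i}. map s [0..<i] ! j) = s"
    by (rule extensionalityI[of _ "{..<i}"]) (use s in \<open>auto simp: PiE_iff\<close>)
  show "map s [0..<i] \<in> {xs. length xs = i}" by simp
  show "F (\<lambda>j. map s [0..<i] ! j) = F (\<lambda>j. s j)" by (rule that) simp
next
  fix xs :: "bool list" assume xs: "xs \<in> {xs. length xs = i}"
  show "map (\<lambda>j\<in>{..<i}. xs ! j) [0..<i] = xs" using xs by (simp add: list_eq_iff_nth_eq)
  show "(\<lambda>j\<in>{..<i}. xs ! j) \<in> {..<i} \<rightarrow>\<^sub>E UNIV" by simp
qed

lemma trace_formula:
  assumes "0 < i"
  shows "(\<Sum>s\<in>{..<i} \<rightarrow>\<^sub>E (UNIV :: bool set). \<Prod>j<i. gg \<alpha> \<beta> (s j) (s (Suc j mod i)))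
          = (\<alpha> + \<beta>) ^ i + (\<alpha> - \<beta>) ^ i"
proof -
  obtain n where n: "i = Suc n" using assms by (cases i) auto
  have "(\<Sum>s\<in>{..<i} \<rightarrow>\<^sub>E (UNIV :: bool set). \<Prod>j<i. gg \<alpha> \<beta> (s j) (s (Suc j mod i)))
     = (\<Sum>xs\<in>{xs :: bool list. length xs = i}. \<Prod>j<i. gg \<alpha> \<beta> (xs ! j) (xs ! (Suc j mod i)))"
  proof (rule PiE_lists_sum[where F = "\<lambda>s. \<Prod>j<i. gg \<alpha> \<beta> (s j) (s (Suc j mod i))"])
    fix s s' :: "nat \<Rightarrow> bool" assume h: "\<And>j. j < i \<Longrightarrow> s j = s' j"
    show "(\<Prod>j<i. gg \<alpha> \<beta> (s j) (s (Suc j mod i))) = (\<Prod>j<i. gg \<alpha> \<beta> (s' j) (s' (Suc j mod i)))"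
    proof (rule prod.cong[OF refl])
      fix j assume "j \<in> {..<i}"
      then show "gg \<alpha> \<beta> (s j) (s (Suc j mod i)) = gg \<alpha> \<beta> (s' j) (s' (Suc j mod i))"
        using h[of j] h[of "Suc j mod i"] assms by simp
    qed
  qed
  also have "\<dots> = (\<Sum>xs\<in>{xs :: bool list. length xs = Suc n}. pe \<alpha> \<beta> (hd xs) (tl xs) (hd xs))"
    using cyc_pe n by simp
  also have "\<dots> = (\<Sum>x\<in>UNIV. \<Sum>zs\<in>{zs :: bool list. length zs = n}. pe \<alpha> \<beta> x zs x)"
    by (simp add: sum_len_Suc)
  also have "\<dots> = (\<alpha> + \<beta>) ^ i + (\<alpha> - \<beta>) ^ i"
    by (simp add: pe_sum UNIV_bool n field_simps)
  finally show ?thesis .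
qed


lemma cell_lt: "x \<in> cm_points d n \<Longrightarrow> cm_cell d x < n"
  unfolding cm_points_def cm_cell_def by (simp add: less_mult_imp_div_less mult.commute)

lemma sum_hc:
  assumes "S \<subseteq> cm_points d n"
  shows "(\<Sum>v<n. hc d n S v) = card S"
proof -
  have eq: "S = (\<Union>v<n. {x \<in> cm_points d n. cm_cell d x = v \<and> x \<in> S})"
    using assms cell_lt by blast
  have "card S = card (\<Union>v<n. {x \<in> cm_points d n. cm_cell d x = v \<and> x \<in> S})"
    by (rule arg_cong[OF eq])
  also have "\<dots> = (\<Sum>v<n. card {x \<in> cm_points d n. cm_cell d x = v \<and> x \<in> S})"
  proof (rule card_UN_disjoint)
    show "finite {..<n}" by simp
    show "\<forall>v\<in>{..<n}. finite {x \<in> cm_points d n. cm_cell d x = v \<and> x \<in> S}"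
      by (simp add: cm_points_def)
    show "\<forall>v\<in>{..<n}. \<forall>w\<in>{..<n}. v \<noteq> w \<longrightarrow>
       {x \<in> cm_points d n. cm_cell d x = v \<and> x \<in> S} \<inter> {x \<in> cm_points d n. cm_cell d x = w \<and> x \<in> S} = {}"
      by blast
  qed
  also have "\<dots> = (\<Sum>v<n. hc d n S v)" unfolding hc_def ..
  finally show ?thesis by simp
qed

lemma hc_le:
  assumes "0 < d" "v < n" shows "hc d n S v \<le> d"
proof -
  have "card {x \<in> cm_points d n. cm_cell d x = v \<and> x \<in> S} \<le> card {x \<in> cm_points d n. cm_cell d x = v}"
    by (rule card_mono) (auto simp: cm_points_def)
  then show ?thesis unfolding hc_def using card_cell[OF assms] by simp
qed

lemma hc_vals:
  assumes d: "0 < d" and S: "S \<in> Vall d p n" and v: "v < n"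
  shows "hc d n S v = p \<or> hc d n S v = d - p"
proof -
  have "card {x\<in>cm_points d n. cm_cell d x = v \<and> x \<in> S} = p \<or>
        card {x\<in>cm_points d n. cm_cell d x = v \<and> x \<notin> S} = p" using S v unfolding Vall_def by blast
  moreover have "{x\<in>cm_points d n. cm_cell d x = v \<and> x \<notin> S} = Xs d n S v False" unfolding Xs_def by simp
  ultimately have "hc d n S v = p \<or> d - hc d n S v = p" using card_Xs[OF d v, of S False] unfolding hc_def by simp
  then show ?thesis using hc_le[OF d v, of S] by auto
qed

lemma numA:
  assumes d: "0 < d" and p: "2 * p < d" and S: "S \<in> Vk d p m"
  shows "card {v \<in> {..<2*m}. hc d (2*m) S v = p} = m"
proof -
  let ?A = "{v \<in> {..<2*m}. hc d (2*m) S v = p}"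
  have SV: "S \<in> Vall d p (2*m)" and cS: "card S = d * m" using S unfolding Vk_def by auto
  have sub: "S \<subseteq> cm_points d (2*m)" using SV unfolding Vall_def by auto
  have B: "hc d (2*m) S v = d - p" if "v \<in> {..<2*m} - ?A" for v
    using hc_vals[OF d SV, of v] that by auto
  have "(\<Sum>v<2*m. hc d (2*m) S v) = (\<Sum>v\<in>{..<2*m} - ?A. hc d (2*m) S v) + (\<Sum>v\<in>?A. hc d (2*m) S v)"
    by (rule sum.subset_diff) auto
  also have "\<dots> = (\<Sum>v\<in>{..<2*m} - ?A. d - p) + (\<Sum>v\<in>?A. p)"
    using B by (intro arg_cong2[where f="(+)"] sum.cong) auto
  also have "\<dots> = card ({..<2*m} - ?A) * (d - p) + card ?A * p" by simp
  also have "card ({..<2*m} - ?A) = 2*m - card ?A" by (subst card_Diff_subset) auto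
  finally have eq: "(2*m - card ?A) * (d - p) + card ?A * p = d * m" using sum_hc[OF sub] cS by simp
  have le: "card ?A \<le> 2*m" using card_mono[of "{..<2*m}" ?A] by auto
  have "int ((2*m - card ?A) * (d - p) + card ?A * p) = int (d * m)" using eq by simp
  then have "(2 * int m - int (card ?A)) * (int d - int p) + int (card ?A) * int p = int d * int m"
    using le p by (simp add: of_nat_diff)
  then have "(int (card ?A) - int m) * (2 * int p - int d) = 0" by (simp add: algebra_simps)
  then show ?thesis using p by simp
qed

lemma sum_ff:
  assumes d: "0 < d" and p: "2 * p < d" and S: "S \<in> Vk d p m"
  shows "(\<Sum>v<2*m. ff d t t' (hc d (2*m) S v)) = m * (ff d t t' p + ff d t t' (d - p))"
proof -
  let ?A = "{v \<in> {..<2*m}. hc d (2*m) S v = p}"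
  have SV: "S \<in> Vall d p (2*m)" using S unfolding Vk_def by auto
  have B: "hc d (2*m) S v = d - p" if "v \<in> {..<2*m} - ?A" for v
    using hc_vals[OF d SV, of v] that by auto
  have cA: "card ?A = m" using numA[OF assms] .
  have "(\<Sum>v<2*m. ff d t t' (hc d (2*m) S v)) = (\<Sum>v\<in>{..<2*m} - ?A. ff d t t' (hc d (2*m) S v)) + (\<Sum>v\<in>?A. ff d t t' (hc d (2*m) S v))"
    by (rule sum.subset_diff) auto
  also have "\<dots> = (\<Sum>v\<in>{..<2*m} - ?A. ff d t t' (d - p)) + (\<Sum>v\<in>?A. ff d t t' p)"
    using B by (intro arg_cong2[where f="(+)"] sum.cong) auto
  also have "\<dots> = card ({..<2*m} - ?A) * ff d t t' (d - p) + card ?A * ff d t t' p" by simp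
  also have "card ({..<2*m} - ?A) = m" using cA by (subst card_Diff_subset) auto
  finally show ?thesis using cA by (simp add: algebra_simps)
qed

definition alp :: "nat \<Rightarrow> nat \<Rightarrow> nat" where "alp d p = 2 * p * (d - p)"
definition bet :: "nat \<Rightarrow> nat \<Rightarrow> nat" where "bet d p = (p * p - p) + ((d - p) * (d - p) - (d - p))"

lemma card_Qs_Vk:
  assumes d: "0 < d" and p: "2 * p < d" and S: "S \<in> Vk d p m"
  shows "card (Qs d (2*m) S t t') = m * (if t = t' then bet d p else alp d p)"
proof -
  have "card (Qs d (2*m) S t t') = m * (ff d t t' p + ff d t t' (d - p))"
    using card_Qs[OF d] sum_ff[OF assms] by simp
  moreover have "d - (d - p) = p" using p by simp
  ultimately show ?thesis unfolding ff_def alp_def bet_def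
    by (cases t; cases t') (simp_all add: algebra_simps)
qed

lemma card_Tp_Vk:
  assumes d: "0 < d" and p: "2 * p < d" and S: "S \<in> Vk d p m" and ip: "0 < i"
  shows "real (card (Tp d i (2*m) S)) = real m ^ i * ((real (alp d p) + real (bet d p)) ^ i + (real (alp d p) - real (bet d p)) ^ i)"
proof -
  have "real (card (Tp d i (2*m) S)) =
      (\<Sum>s\<in>{..<i} \<rightarrow>\<^sub>E (UNIV :: bool set). \<Prod>j<i. real (card (Qs d (2*m) S (\<not> s j) (s (Suc j mod i)))))"
    using card_Tp[OF ip] by simp
  also have "\<dots> = (\<Sum>s\<in>{..<i} \<rightarrow>\<^sub>E (UNIV :: bool set). \<Prod>j<i. real m * gg (real (alp d p)) (real (bet d p)) (s j) (s (Suc j mod i)))"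
    using card_Qs_Vk[OF assms(1-3)] by (intro sum.cong prod.cong refl) (auto simp: gg_def)
  also have "\<dots> = (\<Sum>s\<in>{..<i} \<rightarrow>\<^sub>E (UNIV :: bool set). real m ^ i * (\<Prod>j<i. gg (real (alp d p)) (real (bet d p)) (s j) (s (Suc j mod i))))"
    by (simp add: prod.distrib)
  also have "\<dots> = real m ^ i * ((real (alp d p) + real (bet d p)) ^ i + (real (alp d p) - real (bet d p)) ^ i)"
    by (simp add: sum_distrib_left[symmetric] trace_formula[OF ip])
  finally show ?thesis .
qed


lemma card_noninj:
  "card {v \<in> {..<i} \<rightarrow>\<^sub>E {..<(n::nat)}. \<not> inj_on v {..<i}} \<le> i * i * n ^ (i - 1)"
proof -
  let ?E = "\<lambda>j l. {v \<in> {..<i} \<rightarrow>\<^sub>E {..<n}. v j = v l}"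
  have sub: "{v \<in> {..<i} \<rightarrow>\<^sub>E {..<n}. \<not> inj_on v {..<i}} \<subseteq> (\<Union>j<i. \<Union>l\<in>{..<i} - {j}. ?E j l)"
    unfolding inj_on_def by auto
  have E: "card (?E j l) \<le> n ^ (i - 1)" if j: "j < i" and l: "l \<in> {..<i} - {j}" for j l
  proof -
    have "card (?E j l) \<le> card ({..<i} - {l} \<rightarrow>\<^sub>E {..<n})"
    proof (rule card_inj_on_le)
      show "inj_on (\<lambda>v. restrict v ({..<i} - {l})) (?E j l)"
      proof (rule inj_onI)
        fix v w assume v: "v \<in> ?E j l" and w: "w \<in> ?E j l" and eq: "restrict v ({..<i} - {l}) = restrict w ({..<i} - {l})"
        have jl: "j \<in> {..<i} - {l}" using j l by auto
        have agree: "v x = w x" if "x \<in> {..<i}" for x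
        proof (cases "x = l")
          case True
          have "v j = w j" using fun_cong[OF eq, of j] jl by simp
          then show ?thesis using v w True by simp
        next
          case False
          then have "x \<in> {..<i} - {l}" using that by simp
          then show ?thesis using fun_cong[OF eq, of x] by simp
        qed
        show "v = w" using v w agree by (intro PiE_ext[of v "{..<i}" "\<lambda>_. {..<n}" w]) auto
      qed
      show "(\<lambda>v. restrict v ({..<i} - {l})) ` ?E j l \<subseteq> {..<i} - {l} \<rightarrow>\<^sub>E {..<n}"
      proof (rule image_subsetI)
        fix v assume "v \<in> ?E j l"
        then have "\<forall>x\<in>{..<i}. v x \<in> {..<n}" by (simp add: PiE_iff)
        then show "restrict v ({..<i} - {l}) \<in> {..<i} - {l} \<rightarrow>\<^sub>E {..<n}"
          by (simp add: restrict_PiE_iff)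
      qed
      show "finite ({..<i} - {l} \<rightarrow>\<^sub>E {..<n})" by (simp add: finite_PiE)
    qed
    also have "\<dots> = n ^ (i - 1)" using l by (simp add: card_PiE)
    finally show ?thesis .
  qed
  have "card {v \<in> {..<i} \<rightarrow>\<^sub>E {..<n}. \<not> inj_on v {..<i}} \<le> card (\<Union>j<i. \<Union>l\<in>{..<i} - {j}. ?E j l)"
    by (rule card_mono[OF _ sub]) (auto simp: finite_PiE)
  also have "\<dots> \<le> (\<Sum>j<i. card (\<Union>l\<in>{..<i} - {j}. ?E j l))" by (rule card_UN_le) simp
  also have "\<dots> \<le> (\<Sum>j<i. i * n ^ (i - 1))"
  proof (rule sum_mono)
    fix j assume j: "j \<in> {..<i}"
    have "card (\<Union>l\<in>{..<i} - {j}. ?E j l) \<le> (\<Sum>l\<in>{..<i} - {j}. card (?E j l))" by (rule card_UN_le) simp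
    also have "\<dots> \<le> (\<Sum>l\<in>{..<i} - {j}. n ^ (i - 1))" using E j by (intro sum_mono) auto
    also have "\<dots> = card ({..<i} - {j}) * n ^ (i - 1)" by simp
    also have "\<dots> \<le> i * n ^ (i - 1)" using card_Diff1_le[of "{..<i}" j] by (intro mult_right_mono) auto
    finally show "card (\<Union>l\<in>{..<i} - {j}. ?E j l) \<le> i * n ^ (i - 1)" .
  qed
  also have "\<dots> = i * i * n ^ (i - 1)" by simp
  finally show ?thesis .
qed

lemma card_bad:
  assumes d: "0 < d"
  shows "card (Tp d i n S) - card (Reps d i n S) \<le> i * i * n ^ (i - 1) * d ^ i * d ^ i"
proof -
  let ?B = "Tp d i n S - Reps d i n S"
  let ?NI = "{v \<in> {..<i} \<rightarrow>\<^sub>E {..<n}. \<not> inj_on v {..<i}}"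
  let ?f = "\<lambda>(a,b). ((\<lambda>j\<in>{..<i}. cm_cell d (a j)), (\<lambda>j\<in>{..<i}. a j mod d), (\<lambda>j\<in>{..<i}. b j mod d))"
  have "card (Tp d i n S) - card (Reps d i n S) = card ?B"
    by (rule card_Diff_subset[symmetric]) (use finite_Reps in \<open>auto simp: Reps_def\<close>)
  also have "card ?B \<le> card (?NI \<times> ({..<i} \<rightarrow>\<^sub>E {..<d}) \<times> ({..<i} \<rightarrow>\<^sub>E {..<d}))"
  proof (rule card_inj_on_le)
    show "inj_on ?f ?B"
    proof (rule inj_onI)
      fix r r' assume r: "r \<in> ?B" and r': "r' \<in> ?B" and eq: "?f r = ?f r'"
      obtain a b where ab: "r = (a,b)" by fastforce
      obtain a' b' where ab': "r' = (a',b')" by fastforce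
      have T: "(a,b) \<in> Tp d i n S" "(a',b') \<in> Tp d i n S" using r r' ab ab' by auto
      have e1: "cm_cell d (a j) = cm_cell d (a' j)" "a j mod d = a' j mod d" "b j mod d = b' j mod d" if "j < i" for j
        using eq that ab ab' by (auto dest!: fun_cong[of _ _ j])
      have ea: "a j = a' j" if "j < i" for j
        using e1[OF that] unfolding cm_cell_def by (metis div_mult_mod_eq)
      have eb: "b j = b' j" if j: "j < i" for j
      proof -
        have "cm_cell d (b j) = cm_cell d (b' j)"
          using TpD(3)[OF T(1) j] TpD(3)[OF T(2) j] e1(1)[OF sucmod_lt[OF j]] by simp
        then show ?thesis using e1(3)[OF j] unfolding cm_cell_def by (metis div_mult_mod_eq)
      qed
      have "a = a'" using T ea unfolding Tp_def by (intro PiE_ext[of a "{..<i}" "\<lambda>_. cm_points d n" a']) auto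
      moreover have "b = b'" using T eb unfolding Tp_def by (intro PiE_ext[of b "{..<i}" "\<lambda>_. cm_points d n" b']) auto
      ultimately show "r = r'" using ab ab' by simp
    qed
    show "?f ` ?B \<subseteq> ?NI \<times> ({..<i} \<rightarrow>\<^sub>E {..<d}) \<times> ({..<i} \<rightarrow>\<^sub>E {..<d})"
    proof
      fix z assume "z \<in> ?f ` ?B"
      then obtain a b where ab: "(a,b) \<in> ?B" and z: "z = ?f (a,b)" by auto
      have T: "(a,b) \<in> Tp d i n S" and ni: "\<not> inj_on (\<lambda>j. cm_cell d (a j)) {..<i}"
        using ab unfolding Reps_def by auto
      have "(\<lambda>j\<in>{..<i}. cm_cell d (a j)) \<in> ?NI"
      proof -
        have "cm_cell d (a j) < n" if "j < i" for j
          using TpD(1)[OF T that] unfolding cm_points_def cm_cell_def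
          by (simp add: less_mult_imp_div_less mult.commute)
        moreover have "\<not> inj_on (\<lambda>j\<in>{..<i}. cm_cell d (a j)) {..<i}"
          using ni unfolding inj_on_def by auto
        ultimately show ?thesis by auto
      qed
      moreover have "(\<lambda>j\<in>{..<i}. a j mod d) \<in> {..<i} \<rightarrow>\<^sub>E {..<d}" using d by simp
      moreover have "(\<lambda>j\<in>{..<i}. b j mod d) \<in> {..<i} \<rightarrow>\<^sub>E {..<d}" using d by simp
      ultimately show "z \<in> ?NI \<times> ({..<i} \<rightarrow>\<^sub>E {..<d}) \<times> ({..<i} \<rightarrow>\<^sub>E {..<d})" using z by simp
    qed
    show "finite (?NI \<times> ({..<i} \<rightarrow>\<^sub>E {..<d}) \<times> ({..<i} \<rightarrow>\<^sub>E {..<d}))"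
      by (auto simp: finite_PiE)
  qed
  also have "\<dots> = card ?NI * d ^ i * d ^ i" by (simp add: card_cartesian_product card_PiE)
  also have "\<dots> \<le> i * i * n ^ (i - 1) * d ^ i * d ^ i"
    using card_noninj[of i n] by simp
  finally show ?thesis .
qed


lemma fact_split: "i \<le> k \<Longrightarrow> fact k = fact (k - i) * (\<Prod>l<i. (k - l))"
proof (induction i)
  case 0 then show ?case by simp
next
  case (Suc i)
  then have IH: "fact k = fact (k - i) * (\<Prod>l<i. (k - l))" by simp
  have "k - i = Suc (k - Suc i)" using Suc.prems by simp
  then have "fact (k - i) = (k - i) * fact (k - Suc i)" by (metis fact_Suc of_nat_id)
  then show ?case using IH by (simp add: algebra_simps)
qed

lemma lim_one:
  assumes d: "0 < d"
  shows "(\<lambda>m. real m / real (d * m - l)) \<longlonglongrightarrow> 1 / real d"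
proof -
  have ev: "\<forall>\<^sub>F m in sequentially. 1 / (real d - real l / real m) = real m / real (d * m - l)"
  proof (rule eventually_sequentiallyI[of "Suc l"])
    fix m assume m: "Suc l \<le> m"
    have "m \<le> d * m" using d by simp
    then have le: "l \<le> d * m" using m by linarith
    have mp: "real m > 0" using m by simp
    have "real (d * m - l) = real d * real m - real l" using le by (simp add: of_nat_diff)
    then show "1 / (real d - real l / real m) = real m / real (d * m - l)"
      using mp by (simp add: field_simps)
  qed
  have "(\<lambda>m. 1 / (real d - real l / real m)) \<longlonglongrightarrow> 1 / (real d - 0)"
    using d by (intro tendsto_intros) auto
  then have "(\<lambda>m. 1 / (real d - real l / real m)) \<longlonglongrightarrow> 1 / real d" by simp
  then show ?thesis using ev by (rule Lim_transform_eventually)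
qed

lemma lim_ratio:
  assumes d: "0 < d"
  shows "(\<lambda>m. real m ^ i / (\<Prod>l<i. real (d * m - l))) \<longlonglongrightarrow> (1 / real d) ^ i"
proof -
  have "(\<lambda>m. \<Prod>l<i. real m / real (d * m - l)) \<longlonglongrightarrow> (\<Prod>l<i. 1 / real d)"
    by (rule tendsto_prod) (rule lim_one[OF d])
  moreover have "(\<lambda>m. \<Prod>l<i. real m / real (d * m - l)) = (\<lambda>m. real m ^ i / (\<Prod>l<i. real (d * m - l)))"
    by (simp add: prod_dividef)
  ultimately show ?thesis by simp
qed

lemma lim_small:
  assumes d: "0 < d" and i: "0 < i"
  shows "(\<lambda>m. real m ^ (i - 1) / (\<Prod>l<i. real (d * m - l))) \<longlonglongrightarrow> 0"
proof -
  have "(\<lambda>m. (real m ^ i / (\<Prod>l<i. real (d * m - l))) * (1 / real m)) \<longlonglongrightarrow> (1 / real d) ^ i * 0"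
    by (intro tendsto_mult lim_ratio[OF d] lim_const_over_n)
  moreover have "\<forall>\<^sub>F m in sequentially. (real m ^ i / (\<Prod>l<i. real (d * m - l))) * (1 / real m)
      = real m ^ (i - 1) / (\<Prod>l<i. real (d * m - l))"
  proof (rule eventually_sequentiallyI[of 1])
    fix m :: nat assume "1 \<le> m"
    then have mp: "real m > 0" by simp
    have "real m ^ i = real m * real m ^ (i - 1)" using i by (metis Suc_diff_1 power_Suc)
    then show "(real m ^ i / (\<Prod>l<i. real (d * m - l))) * (1 / real m)
      = real m ^ (i - 1) / (\<Prod>l<i. real (d * m - l))" using mp by simp
  qed
  ultimately show ?thesis by (simp add: Lim_transform_eventually)
qed


lemma mod_in_cell:
  fixes d v x :: nat
  assumes "d * v \<le> x" "x < d * v + d"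
  shows "x mod d = x - d * v"
proof -
  have "x = d * v + (x - d * v)" using assms by simp
  then have "x mod d = (d * v + (x - d * v)) mod d" by simp
  also have "\<dots> = (x - d * v) mod d" by simp
  also have "\<dots> = x - d * v" using assms by simp
  finally show ?thesis .
qed

lemma Vk_nonempty:
  assumes d: "0 < d" and p: "p \<le> d"
  shows "Vk d p m \<noteq> {}"
proof -
  let ?P = "cm_points d (2*m)"
  define S0 where "S0 = {x \<in> ?P. (cm_cell d x < m \<longrightarrow> x mod d < p) \<and> (m \<le> cm_cell d x \<longrightarrow> p \<le> x mod d)}"
  have cellv: "{x \<in> ?P. cm_cell d x = v} = {d*v..<d*v+d}" if "v < 2*m" for v
    using cell_set[OF d that] .
  have inA: "{x \<in> ?P. cm_cell d x = v \<and> x \<in> S0} = {d*v..<d*v+p}" if v: "v < m" for v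
  proof -
    have cv: "{x \<in> ?P. cm_cell d x = v} = {d*v..<d*v+d}" using cellv v by simp
    have "{x \<in> ?P. cm_cell d x = v \<and> x \<in> S0} = {x \<in> {x \<in> ?P. cm_cell d x = v}. x mod d < p}"
      unfolding S0_def using v by auto
    also have "\<dots> = {x \<in> {d*v..<d*v+d}. x mod d < p}" unfolding cv ..
    also have "\<dots> = {d*v..<d*v+p}"
    proof (intro equalityI subsetI)
      fix x assume x: "x \<in> {x \<in> {d*v..<d*v+d}. x mod d < p}"
      then have "d*v \<le> x" "x < d*v+d" "x mod d < p" by auto
      then show "x \<in> {d*v..<d*v+p}" using mod_in_cell[of d v x] by simp
    next
      fix x assume x: "x \<in> {d*v..<d*v+p}"
      then have "d*v \<le> x" "x < d*v+d" "x < d*v+p" using p by auto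
      then show "x \<in> {x \<in> {d*v..<d*v+d}. x mod d < p}" using mod_in_cell[of d v x] by simp
    qed
    finally show ?thesis .
  qed
  have outB: "{x \<in> ?P. cm_cell d x = v \<and> x \<notin> S0} = {d*v..<d*v+p}" if v: "m \<le> v" "v < 2*m" for v
  proof -
    have cv: "{x \<in> ?P. cm_cell d x = v} = {d*v..<d*v+d}" using cellv v by simp
    have "{x \<in> ?P. cm_cell d x = v \<and> x \<notin> S0} = {x \<in> {x \<in> ?P. cm_cell d x = v}. \<not> p \<le> x mod d}"
      unfolding S0_def using v by auto
    also have "\<dots> = {x \<in> {d*v..<d*v+d}. \<not> p \<le> x mod d}" unfolding cv ..
    also have "\<dots> = {d*v..<d*v+p}"
    proof (intro equalityI subsetI)
      fix x assume x: "x \<in> {x \<in> {d*v..<d*v+d}. \<not> p \<le> x mod d}"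
      then have "d*v \<le> x" "x < d*v+d" "x mod d < p" by auto
      then show "x \<in> {d*v..<d*v+p}" using mod_in_cell[of d v x] by simp
    next
      fix x assume x: "x \<in> {d*v..<d*v+p}"
      then have "d*v \<le> x" "x < d*v+d" "x < d*v+p" using p by auto
      then show "x \<in> {x \<in> {d*v..<d*v+d}. \<not> p \<le> x mod d}" using mod_in_cell[of d v x] by simp
    qed
    finally show ?thesis .
  qed
  have sub: "S0 \<subseteq> ?P" unfolding S0_def by blast
  have cond: "\<forall>v<2*m. card {x\<in>?P. cm_cell d x = v \<and> x \<in> S0} = p \<or> card {x\<in>?P. cm_cell d x = v \<and> x \<notin> S0} = p"
  proof (intro allI impI)
    fix v assume v: "v < 2*m"
    show "card {x\<in>?P. cm_cell d x = v \<and> x \<in> S0} = p \<or> card {x\<in>?P. cm_cell d x = v \<and> x \<notin> S0} = p"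
    proof (cases "v < m")
      case True then show ?thesis using inA by simp
    next
      case False then show ?thesis using outB v by simp
    qed
  qed
  have hA: "hc d (2*m) S0 v = p" if "v < m" for v unfolding hc_def using inA[OF that] by simp
  have hB: "hc d (2*m) S0 v = d - p" if v: "m \<le> v" "v < 2*m" for v
  proof -
    have "card (Xs d (2*m) S0 v False) = p" unfolding Xs_def using outB[OF v] by simp
    then have "d - hc d (2*m) S0 v = p" using card_Xs[OF d v(2)] by simp
    then show ?thesis using hc_le[OF d v(2), of S0] by simp
  qed
  have "card S0 = (\<Sum>v<2*m. hc d (2*m) S0 v)" using sum_hc[OF sub] by simp
  also have "\<dots> = (\<Sum>v<m + m. hc d (2*m) S0 v)" by (simp add: mult_2)
  also have "\<dots> = (\<Sum>v<m. hc d (2*m) S0 v) + (\<Sum>v=m..<m+m. hc d (2*m) S0 v)"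
  proof -
    have eq: "{..<m+m} = {..<m} \<union> {m..<m+m}" by auto
    show ?thesis by (subst eq) (rule sum.union_disjoint, auto)
  qed
  also have "\<dots> = (\<Sum>v<m. p) + (\<Sum>v=m..<m+m. d - p)"
    using hA hB by (intro arg_cong2[where f="(+)"] sum.cong) auto
  also have "\<dots> = d * m" using p by (simp add: algebra_simps)
  finally have "card S0 = d * m" .
  then have "S0 \<in> Vk d p m" unfolding Vk_def Vall_def using sub cond by blast
  then show ?thesis by blast
qed


lemma alp_bet:
  assumes "2 * p < d"
  shows "real (alp d p) + real (bet d p) = real d * (real d - 1)"
    "real (alp d p) - real (bet d p) = real d - (real d - 2 * real p) ^ 2"
proof -
  have pd: "p \<le> d" using assms by simp
  have a: "real (alp d p) = 2 * real p * (real d - real p)" unfolding alp_def using pd by (simp add: of_nat_diff)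
  have aux: "real (x * x - x) = real x * real x - real x" for x :: nat
  proof -
    have "real (x * x - x) = real (x * x) - real x" using le_square[of x] by (rule of_nat_diff)
    then show ?thesis by simp
  qed
  have q: "real (d - p) = real d - real p" using pd by (rule of_nat_diff)
  have b1: "real (p * p - p) = real p * real p - real p" by (rule aux)
  have b2: "real ((d - p) * (d - p) - (d - p)) = (real d - real p) * (real d - real p) - (real d - real p)"
    using aux[of "d - p"] unfolding q .
  have b: "real (bet d p) = real p * real p - real p + ((real d - real p) * (real d - real p) - (real d - real p))"
    unfolding bet_def of_nat_add b1 b2 ..
  show "real (alp d p) + real (bet d p) = real d * (real d - 1)" using a b by (simp add: algebra_simps)
  show "real (alp d p) - real (bet d p) = real d - (real d - 2 * real p) ^ 2" using a b by (simp add: algebra_simps power2_eq_square)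
qed

lemma ratio_bounds:
  fixes d p i m :: nat
  assumes d: "4 \<le> d" and p: "2 * p < d" and i: "1 \<le> i" and m: "i \<le> m"
  defines "tr \<equiv> (real (alp d p) + real (bet d p)) ^ i + (real (alp d p) - real (bet d p)) ^ i"
  defines "Pr \<equiv> (\<Prod>l<i. real (d * m - l))"
  defines "E \<equiv> real (i * i * (2 * m) ^ (i - 1) * d ^ i * d ^ i)"
  shows "(real m ^ i * tr - E) / (2 * real i * Pr) \<le>
           cm_expect d (2 * m) (\<lambda>F. real (numY d p (2 * m) F * numX d i F))
              / cm_expect d (2 * m) (\<lambda>F. real (numY d p (2 * m) F))"
    "cm_expect d (2 * m) (\<lambda>F. real (numY d p (2 * m) F * numX d i F))
              / cm_expect d (2 * m) (\<lambda>F. real (numY d p (2 * m) F)) \<le> real m ^ i * tr / (2 * real i * Pr)"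
proof -
  have d0: "0 < d" using d by simp
  have ip: "0 < i" using i by simp
  let ?k = "d * m"
  have "m \<le> d * m" using d0 by simp
  then have ik: "i \<le> ?k" using m by linarith
  let ?V = "card (Vk d p m)"
  let ?G = "\<Sum>S\<in>Vk d p m. card (goodcyc d i (2*m) S)"
  have Vpos: "0 < ?V" using Vk_nonempty[OF d0, of p m] p finite_Vk[of d p m] by (simp add: card_gt_0_iff)
  have Prpos: "0 < Pr" unfolding Pr_def
  proof (intro prod_pos)
    fix l assume "l \<in> {..<i}"
    then have "l < d * m" using ik by simp
    then show "0 < real (d * m - l)" by (metis of_nat_0_less_iff zero_less_diff)
  qed
  have fk: "real (fact ?k) = real (fact (?k - i)) * Pr"
    unfolding Pr_def using fact_split[OF ik] by (simp add: of_nat_diff)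
  have ratio: "cm_expect d (2 * m) (\<lambda>F. real (numY d p (2 * m) F * numX d i F))
              / cm_expect d (2 * m) (\<lambda>F. real (numY d p (2 * m) F)) = real ?G / (real ?V * Pr)"
  proof -
    have "cm_expect d (2 * m) (\<lambda>F. real (numY d p (2 * m) F * numX d i F))
              / cm_expect d (2 * m) (\<lambda>F. real (numY d p (2 * m) F))
        = real (?G * fact (?k - i)) / real (?V * fact ?k)" by (rule ratio_eq)
    also have "\<dots> = real ?G * real (fact (?k - i)) / (real ?V * (real (fact (?k - i)) * Pr))"
      using fk by simp
    also have "\<dots> = real ?G / (real ?V * Pr)" by (simp add: field_simps)
    finally show ?thesis .
  qed
  have gS: "real m ^ i * tr - E \<le> 2 * real i * real (card (goodcyc d i (2*m) S)) \<and>
            2 * real i * real (card (goodcyc d i (2*m) S)) \<le> real m ^ i * tr" if S: "S \<in> Vk d p m" for S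
  proof -
    have T: "real (card (Tp d i (2*m) S)) = real m ^ i * tr"
      unfolding tr_def using card_Tp_Vk[OF d0 p S ip] by simp
    have R: "card (Reps d i (2*m) S) = 2 * i * card (goodcyc d i (2*m) S)" using reps_card[OF ip] .
    have sub: "card (Reps d i (2*m) S) \<le> card (Tp d i (2*m) S)"
      by (rule card_mono[OF finite_Tp]) (auto simp: Reps_def)
    have bad: "card (Tp d i (2*m) S) - card (Reps d i (2*m) S) \<le> i * i * (2 * m) ^ (i - 1) * d ^ i * d ^ i"
      using card_bad[OF d0] .
    have "real (card (Tp d i (2*m) S)) - real (card (Reps d i (2*m) S)) \<le> E"
      using bad sub unfolding E_def by (metis of_nat_diff of_nat_le_iff)
    moreover have "real (card (Reps d i (2*m) S)) \<le> real (card (Tp d i (2*m) S))" using sub by simp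
    moreover have "real (card (Reps d i (2*m) S)) = 2 * real i * real (card (goodcyc d i (2*m) S))"
      using R by simp
    ultimately show ?thesis using T by linarith
  qed
  have Gsum: "real ?G = (\<Sum>S\<in>Vk d p m. real (card (goodcyc d i (2*m) S)))" by simp
  have lo: "real ?V * ((real m ^ i * tr - E) / (2 * real i)) \<le> real ?G"
  proof -
    have "real ?V * ((real m ^ i * tr - E) / (2 * real i)) = (\<Sum>S\<in>Vk d p m. (real m ^ i * tr - E) / (2 * real i))"
      by simp
    also have "\<dots> \<le> (\<Sum>S\<in>Vk d p m. real (card (goodcyc d i (2*m) S)))"
      using gS ip by (intro sum_mono) (simp add: field_simps)
    finally show ?thesis using Gsum by simp
  qed
  have hi: "real ?G \<le> real ?V * (real m ^ i * tr / (2 * real i))"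
  proof -
    have "(\<Sum>S\<in>Vk d p m. real (card (goodcyc d i (2*m) S))) \<le> (\<Sum>S\<in>Vk d p m. real m ^ i * tr / (2 * real i))"
      using gS ip by (intro sum_mono) (simp add: field_simps)
    also have "\<dots> = real ?V * (real m ^ i * tr / (2 * real i))" by simp
    finally show ?thesis using Gsum by simp
  qed
  have VP: "0 < real ?V * Pr" using Vpos Prpos by simp
  show "(real m ^ i * tr - E) / (2 * real i * Pr) \<le>
           cm_expect d (2 * m) (\<lambda>F. real (numY d p (2 * m) F * numX d i F))
              / cm_expect d (2 * m) (\<lambda>F. real (numY d p (2 * m) F))"
    unfolding ratio
  proof -
    have "(real m ^ i * tr - E) / (2 * real i * Pr) = (real ?V * ((real m ^ i * tr - E) / (2 * real i))) / (real ?V * Pr)"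
      using Vpos Prpos ip by (simp add: field_simps)
    also have "\<dots> \<le> real ?G / (real ?V * Pr)" by (rule divide_right_mono[OF lo]) (use VP in simp)
    finally show "(real m ^ i * tr - E) / (2 * real i * Pr) \<le> real ?G / (real ?V * Pr)" .
  qed
  show "cm_expect d (2 * m) (\<lambda>F. real (numY d p (2 * m) F * numX d i F))
              / cm_expect d (2 * m) (\<lambda>F. real (numY d p (2 * m) F)) \<le> real m ^ i * tr / (2 * real i * Pr)"
    unfolding ratio
  proof -
    have "real ?G / (real ?V * Pr) \<le> (real ?V * (real m ^ i * tr / (2 * real i))) / (real ?V * Pr)"
      by (rule divide_right_mono[OF hi]) (use VP in simp)
    also have "\<dots> = real m ^ i * tr / (2 * real i * Pr)"
      using Vpos Prpos ip by (simp add: field_simps)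
    finally show "real ?G / (real ?V * Pr) \<le> real m ^ i * tr / (2 * real i * Pr)" .
  qed
qed


lemma delta_gt:
  fixes d p i :: nat
  assumes d: "4 \<le> d" and p1: "1 \<le> p" and p: "2 * p < d" and i: "1 \<le> i"
  shows "delta_i d p i > -1"
proof -
  define q where "q = real d - 2 * real p"
  have q1: "1 \<le> q" using p unfolding q_def by linarith
  have q2: "q \<le> real d - 2" using p1 unfolding q_def by simp
  have dpos: "0 < real d * (real d - 1)" using d by simp
  have X: "- ((real d)^2 - 4 * real d * real p + 4 * (real p)^2 - real d) = real d - q ^ 2"
    unfolding q_def by (simp add: power2_eq_square algebra_simps)
  define x where "x = (real d - q ^ 2) / (real d * (real d - 1))"
  have dx: "delta_i d p i = x ^ i" unfolding delta_i_def x_def X by simp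
  have qsq1: "1 \<le> q ^ 2" using q1 by (simp add: one_le_power)
  have qsq2: "q ^ 2 \<le> (real d - 2) ^ 2" using q1 q2 by (intro power_mono) auto
  have up: "real d - q ^ 2 < real d * (real d - 1)"
  proof -
    have "real d - q ^ 2 \<le> real d - 1" using qsq1 by simp
    also have "\<dots> < real d * (real d - 1)"
    proof -
      have h: "0 < (real d - 1) * (real d - 1)" using d by simp
      have "real d * (real d - 1) - (real d - 1) = (real d - 1) * (real d - 1)" by (simp add: algebra_simps)
      then show ?thesis using h by linarith
    qed
    finally show ?thesis .
  qed
  have lo: "- (real d * (real d - 1)) < real d - q ^ 2"
  proof -
    have "(real d - 2) ^ 2 = real d * real d - 4 * real d + 4" by (simp add: power2_eq_square algebra_simps)
    then have "q ^ 2 < real d * real d" using qsq2 d by simp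
    then show ?thesis by (simp add: algebra_simps)
  qed
  have ax: "\<bar>x\<bar> < 1" unfolding x_def using up lo dpos by (simp add: abs_less_iff divide_less_eq less_divide_eq)
  have "\<bar>x\<bar> ^ i < 1 ^ i" using ax i by (intro power_strict_mono) auto
  then have "\<bar>x ^ i\<bar> < 1" by (simp add: power_abs)
  then show ?thesis using dx by (simp add: abs_less_iff)
qed


lemma limit_value:
  fixes d p i :: nat
  assumes d: "4 \<le> d" and p: "2 * p < d" and i: "1 \<le> i"
  shows "((real (alp d p) + real (bet d p)) ^ i + (real (alp d p) - real (bet d p)) ^ i) / (2 * real i) * (1 / real d) ^ i
     = lambda_i d i * (1 + delta_i d p i)"
proof -
  define X where "X = real d - (real d - 2 * real p) ^ 2"
  have dp: "real d \<noteq> 0" "real d - 1 \<noteq> 0" using d by auto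
  have Xe: "- ((real d)^2 - 4 * real d * real p + 4 * (real p)^2 - real d) = X"
    unfolding X_def by (simp add: power2_eq_square algebra_simps)
  have dl: "delta_i d p i = (X / (real d * (real d - 1))) ^ i" unfolding delta_i_def Xe by simp
  have e1: "real d * (real d - 1) * (1 / real d) = real d - 1" using dp by simp
  have f1: "(real d * (real d - 1)) ^ i * (1 / real d) ^ i = (real d - 1) ^ i"
    by (simp only: power_mult_distrib[symmetric] e1)
  have e2: "X * (1 / real d) = (real d - 1) * (X / (real d * (real d - 1)))" using dp by (simp add: field_simps)
  have f2: "X ^ i * (1 / real d) ^ i = (real d - 1) ^ i * (X / (real d * (real d - 1))) ^ i"
    by (simp only: power_mult_distrib[symmetric] e2)
  have "((real (alp d p) + real (bet d p)) ^ i + (real (alp d p) - real (bet d p)) ^ i) / (2 * real i) * (1 / real d) ^ i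
      = ((real d * (real d - 1)) ^ i + X ^ i) / (2 * real i) * (1 / real d) ^ i"
    using alp_bet[OF p] unfolding X_def by simp
  also have "\<dots> = ((real d * (real d - 1)) ^ i * (1 / real d) ^ i + X ^ i * (1 / real d) ^ i) / (2 * real i)"
    by (simp only: times_divide_eq_left distrib_right)
  also have "\<dots> = ((real d - 1) ^ i + (real d - 1) ^ i * (X / (real d * (real d - 1))) ^ i) / (2 * real i)"
    by (simp only: f1 f2)
  also have "\<dots> = lambda_i d i * (1 + delta_i d p i)"
    unfolding lambda_i_def dl by (simp only: distrib_left mult_1_right add_divide_distrib times_divide_eq_left)
  finally show ?thesis .
qed

theorem lemma3p3:
  fixes d p i :: nat
  assumes "d \<ge> 4" and "1 \<le> p" and "2 * p < d" and "i \<ge> 1"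
  shows "(\<lambda>m. cm_expect d (2 * m) (\<lambda>F. real (numY d p (2 * m) F * numX d i F))
              / cm_expect d (2 * m) (\<lambda>F. real (numY d p (2 * m) F)))
           \<longlonglongrightarrow> lambda_i d i * (1 + delta_i d p i)
         \<and> delta_i d p i > -1"
proof
  have d0: "0 < d" using assms by simp
  have ip: "0 < i" using assms by simp
  define tr where "tr = (real (alp d p) + real (bet d p)) ^ i + (real (alp d p) - real (bet d p)) ^ i"
  define K where "K = real (i * i * 2 ^ (i - 1) * d ^ i * d ^ i)"
  define c where "c = tr / (2 * real i) * (1 / real d) ^ i"
  define U where "U = (\<lambda>m::nat. tr / (2 * real i) * (real m ^ i / (\<Prod>l<i. real (d * m - l))))"
  define L where "L = (\<lambda>m::nat. U m - K / (2 * real i) * (real m ^ (i - 1) / (\<Prod>l<i. real (d * m - l))))"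
  let ?f = "\<lambda>m. cm_expect d (2 * m) (\<lambda>F. real (numY d p (2 * m) F * numX d i F))
              / cm_expect d (2 * m) (\<lambda>F. real (numY d p (2 * m) F))"
  have Ulim: "U \<longlonglongrightarrow> c" unfolding U_def c_def by (intro tendsto_mult_left lim_ratio[OF d0])
  have Llim: "L \<longlonglongrightarrow> c - K / (2 * real i) * 0" unfolding L_def
    by (intro tendsto_diff Ulim tendsto_mult_left lim_small[OF d0 ip])
  have bnds: "L m \<le> ?f m \<and> ?f m \<le> U m" if m: "i \<le> m" for m
  proof -
    define Pr where "Pr = (\<Prod>l<i. real (d * m - l))"
    have "m \<le> d * m" using d0 by simp
    then have ik: "i \<le> d * m" using m by linarith
    have Prpos: "0 < Pr" unfolding Pr_def
    proof (intro prod_pos)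
      fix l assume "l \<in> {..<i}"
      then have "l < d * m" using ik by simp
      then show "0 < real (d * m - l)" by (metis of_nat_0_less_iff zero_less_diff)
    qed
    note RB = ratio_bounds[OF assms(1) assms(3) assms(4) m]
    have E: "real (i * i * (2 * m) ^ (i - 1) * d ^ i * d ^ i) = K * real m ^ (i - 1)"
      unfolding K_def by (simp add: power_mult_distrib)
    have Ue: "real m ^ i * tr / (2 * real i * Pr) = U m"
      unfolding U_def Pr_def[symmetric] using Prpos ip by (simp add: field_simps)
    have Le: "(real m ^ i * tr - K * real m ^ (i - 1)) / (2 * real i * Pr) = L m"
      unfolding L_def U_def Pr_def[symmetric] using Prpos ip by (simp add: field_simps)
    show ?thesis using RB unfolding tr_def[symmetric] Pr_def[symmetric] E Ue Le by simp
  qed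
  have ev1: "\<forall>\<^sub>F m in sequentially. L m \<le> ?f m" using bnds by (intro eventually_sequentiallyI[of i]) auto
  have ev2: "\<forall>\<^sub>F m in sequentially. ?f m \<le> U m" using bnds by (intro eventually_sequentiallyI[of i]) auto
  have "?f \<longlonglongrightarrow> c" using Llim by (intro tendsto_sandwich[OF ev1 ev2 _ Ulim]) simp
  moreover have "c = lambda_i d i * (1 + delta_i d p i)"
    unfolding c_def tr_def using limit_value[OF assms(1) assms(3) assms(4)] .
  ultimately show "?f \<longlonglongrightarrow> lambda_i d i * (1 + delta_i d p i)" by simp
  show "delta_i d p i > -1" using delta_gt[OF assms] .
qed


end
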